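(* There exist absolute constants $c_0,c,c',C>0$ such that the following holds. Let $k\ge 2$, $n\ge 1$ and $\varepsilon\in(0,1]$ with $\varepsilon\ge c_0 n^{-1/4}$. Let $P$ be a distribution on $[n]$ with $\mathrm{d_{TV}}(P,U_n)\ge\varepsilon$, and let $D_1,\dots,D_k$ be distributions on $[n]$ such that for an unknown set $\chi\subseteq[k]$, $D_i=P$ for $i\in\chi$ and $D_i=U_n$ for $i\in[k]\setminus\chi$. Then the $\mathtt{ESW\text{-}Tester}$ (with constants $c,c'$) outputs $\hat\chi=\chi$ with probability at least $8/9$, and its total sample complexity $s_1+ks_2$ is at most $C\frac{\sqrt{nk\log k}}{\varepsilon^2}$ if $n\ge \frac{k\log k}{\varepsilon^4}$, and at most $C\frac{k\log k}{\varepsilon^4}$ if $n\le\frac{k\log k}{\varepsilon^4}$.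
   Context: $U_n$ is the uniform distribution on $[n]$; $\mathrm{d_{TV}}$ is total variation distance. The $\mathtt{ESW\text{-}Tester}$ (with constants $c,c'$) is the following procedure, given $\varepsilon$, sample access to $P$ and to $D_1,\dots,D_k$: set $s_1=\min\!\big(n,\frac{\sqrt{nk\log k}}{\varepsilon^2}\big)$, $s_2=c\,\frac{n\log k}{s_1\varepsilon^4}$ (rounded up to integers), and $\tau=c'\,\frac{s_1\varepsilon^2}{n}$. Draw a multiset $\mathcal S$ of $s_1$ i.i.d. samples from $P$ and let $S$ be its set of distinct elements. For each $j\in[k]$, draw $s_2$ i.i.d. samples $X_1,\dots,X_{s_2}$ from $D_j$, compute $Z_j=\frac1{s_2}\sum_{t=1}^{s_2}\mathbb 1\{X_t\in S\}$, and put $j$ into $\hat\chi$ iff $Z_j\ge 1-(1-\frac1n)^{s_1}+2\tau$. Output $\hat\chi$. *)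

theory Defs
  imports "HOL-Probability.Probability"
begin

text \<open>Distributions on [n] = {1..n} are modelled as nat pmfs supported in {1..n}.\<close>

definition unif :: "nat \<Rightarrow> nat pmf" where
  "unif n = pmf_of_set {1..n}"

definition dTV :: "nat \<Rightarrow> nat pmf \<Rightarrow> nat pmf \<Rightarrow> real" where
  "dTV n P Q = (1/2) * (\<Sum>x\<in>{1..n}. \<bar>pmf P x - pmf Q x\<bar>)"

definition esw_s1 :: "nat \<Rightarrow> nat \<Rightarrow> real \<Rightarrow> nat" where
  "esw_s1 n k \<epsilon> = nat \<lceil>min (real n) (sqrt (real n * real k * ln (real k)) / \<epsilon>^2)\<rceil>"

definition esw_s2 :: "real \<Rightarrow> nat \<Rightarrow> nat \<Rightarrow> real \<Rightarrow> nat" where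
  "esw_s2 c n k \<epsilon> = nat \<lceil>c * real n * ln (real k) / (real (esw_s1 n k \<epsilon>) * \<epsilon>^4)\<rceil>"

definition esw_tau :: "real \<Rightarrow> nat \<Rightarrow> nat \<Rightarrow> real \<Rightarrow> real" where
  "esw_tau c' n k \<epsilon> = c' * real (esw_s1 n k \<epsilon>) * \<epsilon>^2 / real n"

definition esw_tester ::
  "real \<Rightarrow> real \<Rightarrow> nat \<Rightarrow> nat \<Rightarrow> real \<Rightarrow> nat pmf \<Rightarrow> (nat \<Rightarrow> nat pmf) \<Rightarrow> nat set pmf" where
  "esw_tester c c' n k \<epsilon> P D =
     (let s1 = esw_s1 n k \<epsilon>; s2 = esw_s2 c n k \<epsilon>; \<tau> = esw_tau c' n k \<epsilon>;
          thr = 1 - (1 - 1 / real n) ^ s1 + 2 * \<tau>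
      in do {
        xs \<leftarrow> replicate_pmf s1 P;
        Xs \<leftarrow> Pi_pmf {1..k} [] (\<lambda>j. replicate_pmf s2 (D j));
        return_pmf {j \<in> {1..k}.
          real (length (filter (\<lambda>x. x \<in> set xs) (Xs j))) / real s2 \<ge> thr}
      })"

end

theory Submission
  imports Defs "HOL-Probability.Probability"
begin


lemma prob_bind_pmf: "measure_pmf.prob (bind_pmf M f) A = (\<integral>x. measure_pmf.prob (f x) A \<partial>M)"
proof -
  have "ennreal (measure_pmf.prob (bind_pmf M f) A) = (\<integral>\<^sup>+x. ennreal (measure_pmf.prob (f x) A) \<partial>M)"
    by (simp add: measure_pmf.emeasure_eq_measure[symmetric])
  also have "\<dots> = ennreal (\<integral>x. measure_pmf.prob (f x) A \<partial>M)"
    by (intro nn_integral_eq_integral measure_pmf.integrable_const_bound[where B=1]) auto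
  finally show ?thesis by (simp add: integral_nonneg_AE)
qed

lemma replicate_pmf_Suc_pair:
  "replicate_pmf (Suc s) P = map_pmf (\<lambda>(x,xs). x # xs) (pair_pmf P (replicate_pmf s P))"
  by (simp add: pair_pmf_def map_bind_pmf map_return_pmf)

lemma prob_mono_pmf:
  assumes "\<And>x. x \<in> set_pmf M \<Longrightarrow> x \<in> A \<Longrightarrow> x \<in> B"
  shows "measure_pmf.prob M A \<le> measure_pmf.prob M B"
proof -
  have "measure_pmf.prob M A = measure_pmf.prob M (A \<inter> set_pmf M)"
    by (simp add: measure_Int_set_pmf)
  also have "\<dots> \<le> measure_pmf.prob M B"
    using assms by (intro measure_pmf.finite_measure_mono) auto
  finally show ?thesis .
qed

lemma replicate_avoid:
  fixes P :: "nat pmf"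
  shows "measure_pmf.prob (replicate_pmf s P) {xs. set xs \<inter> A = {}} = (1 - measure_pmf.prob P A) ^ s"
proof (induction s)
  case 0
  then show ?case by simp
next
  case (Suc s)
  have eq: "(\<lambda>(x, xs). x # xs) -` {xs. set xs \<inter> A = {}} = (- A) \<times> {xs. set xs \<inter> A = {}}"
    by auto
  have "measure_pmf.prob (replicate_pmf (Suc s) P) {xs. set xs \<inter> A = {}}
      = measure_pmf.prob P (- A) * measure_pmf.prob (replicate_pmf s P) {xs. set xs \<inter> A = {}}"
    unfolding replicate_pmf_Suc_pair measure_map_pmf eq
    by (rule measure_pmf_prob_product) auto
  also have "measure_pmf.prob P (- A) = 1 - measure_pmf.prob P A"
    by (simp add: measure_pmf.prob_compl[symmetric] Compl_eq_Diff_UNIV)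
  finally show ?case using Suc by simp
qed

lemma replicate_in:
  fixes P :: "nat pmf"
  shows "measure_pmf.prob (replicate_pmf s P) {xs. x \<in> set xs} = 1 - (1 - pmf P x) ^ s"
proof -
  have "measure_pmf.prob (replicate_pmf s P) {xs. x \<in> set xs}
     = 1 - measure_pmf.prob (replicate_pmf s P) {xs. set xs \<inter> {x} = {}}"
    by (subst measure_pmf.prob_compl[symmetric]) (auto intro!: arg_cong[where f="measure_pmf.prob _"])
  moreover have "{xs. set xs \<inter> {x} = {}} = {xs. x \<notin> set xs}" by auto
  ultimately show ?thesis using replicate_avoid[of s P "{x}"] by (simp add: measure_pmf_single)
qed

lemma replicate_in2:
  fixes P :: "nat pmf"
  assumes "x \<noteq> y"
  shows "measure_pmf.prob (replicate_pmf s P) {xs. x \<in> set xs \<and> y \<in> set xs}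
     = 1 - (1 - pmf P x) ^ s - (1 - pmf P y) ^ s + (1 - pmf P x - pmf P y) ^ s"
proof -
  let ?M = "replicate_pmf s P"
  let ?X = "{xs. x \<in> set xs}" and ?Y = "{xs. y \<in> set xs}"
  have u: "measure_pmf.prob ?M (?X \<union> ?Y) = 1 - measure_pmf.prob ?M {xs. set xs \<inter> {x,y} = {}}"
    by (subst measure_pmf.prob_compl[symmetric]) (auto intro!: arg_cong[where f="measure_pmf.prob _"])
  have "measure_pmf.prob P {x, y} = pmf P x + pmf P y"
    using assms by (simp add: measure_pmf.finite_measure_eq_sum_singleton measure_pmf_single)
  then have u2: "measure_pmf.prob ?M (?X \<union> ?Y) = 1 - (1 - pmf P x - pmf P y) ^ s"
    using u replicate_avoid[of s P "{x,y}"] by (simp add: algebra_simps)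
  have "measure_pmf.prob ?M (?X \<union> ?Y) = measure_pmf.prob ?M ?X + measure_pmf.prob ?M ?Y - measure_pmf.prob ?M (?X \<inter> ?Y)"
    by (rule measure_Un3) (auto simp: fmeasurable_def measure_pmf.emeasure_eq_measure)
  then show ?thesis using u2 by (simp add: replicate_in Int_def)
qed



lemma finite_set_replicate_pmf:
  assumes "finite (set_pmf P)"
  shows "finite (set_pmf (replicate_pmf s P))"
proof -
  have "set_pmf (replicate_pmf s P) \<subseteq> {xs. set xs \<subseteq> set_pmf P \<and> length xs = s}"
    by (auto simp: set_replicate_pmf)
  moreover have "finite {xs. set xs \<subseteq> set_pmf P \<and> length xs = s}"
    using assms by (rule finite_lists_length_eq)
  ultimately show ?thesis by (rule finite_subset)
qed

definition Fq :: "nat \<Rightarrow> real \<Rightarrow> real" where "Fq s p = 1 - (1 - p) ^ s"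

lemma Fq_nonneg: "0 \<le> p \<Longrightarrow> p \<le> 1 \<Longrightarrow> 0 \<le> Fq s p"
  unfolding Fq_def by (simp add: power_le_one)

lemma Fq_le1: "0 \<le> p \<Longrightarrow> p \<le> 1 \<Longrightarrow> Fq s p \<le> 1"
  unfolding Fq_def by simp

lemma second_moment:
  fixes P :: "nat pmf" and w :: "nat \<Rightarrow> real" and s :: nat
  assumes fin: "finite (set_pmf P)" and X: "finite X" and w: "\<And>x. x \<in> X \<Longrightarrow> 0 \<le> w x"
  defines "Y \<equiv> (\<lambda>xs. \<Sum>x\<in>X. w x * indicator {xs. x \<in> set xs} xs)"
  defines "c \<equiv> (\<Sum>x\<in>X. w x * Fq s (pmf P x))"
  defines "V \<equiv> (\<Sum>x\<in>X. (w x)^2 * (Fq s (pmf P x) * (1 - Fq s (pmf P x))))"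
  shows "measure_pmf.expectation (replicate_pmf s P) Y = c"
    and "measure_pmf.expectation (replicate_pmf s P) (\<lambda>xs. (Y xs - c)^2) \<le> V"
proof -
  let ?M = "replicate_pmf s P"
  have finM: "finite (set_pmf ?M)" using fin by (rule finite_set_replicate_pmf)
  have int: "integrable (measure_pmf ?M) f" for f :: "nat list \<Rightarrow> real"
    using finM by (rule integrable_measure_pmf_finite)
  let ?I = "\<lambda>x. indicator {xs. x \<in> set xs} :: nat list \<Rightarrow> real"
  have EI: "measure_pmf.expectation ?M (?I x) = Fq s (pmf P x)" for x
    by (simp add: replicate_in Fq_def)
  show EY: "measure_pmf.expectation ?M Y = c"
    unfolding Y_def c_def using int by (simp add: Bochner_Integration.integral_sum replicate_in Fq_def)
  have YY: "(Y xs)^2 = (\<Sum>x\<in>X. \<Sum>y\<in>X. w x * w y * (?I x xs * ?I y xs))" for xs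
    unfolding Y_def power2_eq_square sum_product by (simp add: algebra_simps)
  have EII: "measure_pmf.expectation ?M (\<lambda>xs. ?I x xs * ?I y xs) \<le>
      (if x = y then Fq s (pmf P x) else Fq s (pmf P x) * Fq s (pmf P y))" for x y
  proof (cases "x = y")
    case True
    then show ?thesis using EI[of x] by (simp add: indicator_inter_arith[symmetric])
  next
    case False
    have "measure_pmf.expectation ?M (\<lambda>xs. ?I x xs * ?I y xs)
        = measure_pmf.prob ?M {xs. x \<in> set xs \<and> y \<in> set xs}"
      by (simp add: indicator_inter_arith[symmetric] Int_def)
    also have "\<dots> = 1 - (1 - pmf P x) ^ s - (1 - pmf P y) ^ s + (1 - pmf P x - pmf P y) ^ s"
      using False by (rule replicate_in2)
    also have "\<dots> \<le> 1 - (1 - pmf P x) ^ s - (1 - pmf P y) ^ s + ((1 - pmf P x) * (1 - pmf P y)) ^ s"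
    proof -
      have "measure_pmf.prob P {x, y} = pmf P x + pmf P y"
        using False by (simp add: measure_pmf.finite_measure_eq_sum_singleton measure_pmf_single)
      then have "pmf P x + pmf P y \<le> 1" by (metis measure_pmf.prob_le_1)
      then have "(1 - pmf P x - pmf P y) ^ s \<le> ((1 - pmf P x) * (1 - pmf P y)) ^ s"
        by (intro power_mono) (auto simp: algebra_simps pmf_nonneg)
      then show ?thesis by simp
    qed
    also have "\<dots> = Fq s (pmf P x) * Fq s (pmf P y)"
      by (simp add: Fq_def power_mult_distrib[symmetric] algebra_simps)
    finally show ?thesis using False by simp
  qed
  have EY2: "measure_pmf.expectation ?M (\<lambda>xs. (Y xs)^2) \<le> c^2 + V"
  proof -
    have "measure_pmf.expectation ?M (\<lambda>xs. (Y xs)^2)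
        = (\<Sum>x\<in>X. \<Sum>y\<in>X. w x * w y * measure_pmf.expectation ?M (\<lambda>xs. ?I x xs * ?I y xs))"
      unfolding YY using int by (simp add: Bochner_Integration.integral_sum)
    also have "\<dots> \<le> (\<Sum>x\<in>X. \<Sum>y\<in>X. w x * w y *
        (if x = y then Fq s (pmf P x) else Fq s (pmf P x) * Fq s (pmf P y)))"
      using w EII by (intro sum_mono mult_left_mono) auto
    also have "\<dots> = (\<Sum>x\<in>X. \<Sum>y\<in>X. w x * w y * (Fq s (pmf P x) * Fq s (pmf P y))
        + (if x = y then (w x)^2 * (Fq s (pmf P x) * (1 - Fq s (pmf P x))) else 0))"
      by (intro sum.cong refl) (auto simp: algebra_simps power2_eq_square)
    also have "\<dots> = c^2 + V"
      unfolding c_def V_def power2_eq_square sum.distrib sum_product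
      using X by (simp add: algebra_simps if_distrib sum.delta cong: if_cong)
    finally show ?thesis .
  qed
  have "measure_pmf.expectation ?M (\<lambda>xs. (Y xs - c)^2)
      = measure_pmf.expectation ?M (\<lambda>xs. (Y xs)^2) - 2 * c * measure_pmf.expectation ?M Y + c^2"
    using int by (simp add: power2_diff Bochner_Integration.integral_diff Bochner_Integration.integral_add)
  also have "\<dots> \<le> V" using EY EY2 by (simp add: power2_eq_square)
  finally show "measure_pmf.expectation ?M (\<lambda>xs. (Y xs - c)^2) \<le> V" .
qed

lemma chebyshev_sq:
  fixes M :: "'a pmf" and Z :: "'a \<Rightarrow> real"
  assumes fin: "finite (set_pmf M)" and t: "t > 0"
  shows "measure_pmf.prob M {x. t \<le> \<bar>Z x\<bar>} \<le> measure_pmf.expectation M (\<lambda>x. (Z x)^2) / t^2"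
proof -
  have "measure_pmf.prob M {x. t \<le> \<bar>Z x\<bar>} \<le> measure_pmf.prob M {x \<in> space (measure_pmf M). t^2 \<le> (Z x)^2}"
    using t by (intro measure_pmf.finite_measure_mono) (auto simp: abs_le_square_iff[symmetric])
  also have "\<dots> \<le> measure_pmf.expectation M (\<lambda>x. (Z x)^2) / t^2"
    using t by (intro integral_Markov_inequality_measure integrable_measure_pmf_finite fin) auto
  finally show ?thesis .
qed

lemma cheb_weighted:
  fixes P :: "nat pmf" and w :: "nat \<Rightarrow> real" and s :: nat
  assumes fin: "finite (set_pmf P)" and X: "finite X" and w: "\<And>x. x \<in> X \<Longrightarrow> 0 \<le> w x"
    and t: "t > 0"
  defines "Y \<equiv> (\<lambda>xs. \<Sum>x\<in>X. w x * indicator {xs. x \<in> set xs} xs)"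
  defines "c \<equiv> (\<Sum>x\<in>X. w x * Fq s (pmf P x))"
  defines "V \<equiv> (\<Sum>x\<in>X. (w x)^2 * (Fq s (pmf P x) * (1 - Fq s (pmf P x))))"
  shows "measure_pmf.prob (replicate_pmf s P) {xs. Y xs \<le> c - t} \<le> V / t^2"
    and "measure_pmf.prob (replicate_pmf s P) {xs. c + t \<le> Y xs} \<le> V / t^2"
proof -
  let ?M = "replicate_pmf s P"
  have finM: "finite (set_pmf ?M)" using fin by (rule finite_set_replicate_pmf)
  have E: "measure_pmf.expectation ?M (\<lambda>xs. (Y xs - c)^2) \<le> V"
    unfolding Y_def c_def V_def by (rule second_moment(2)[OF fin X w])
  have ch: "measure_pmf.prob ?M {xs. t \<le> \<bar>Y xs - c\<bar>} \<le> V / t^2"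
    using chebyshev_sq[OF finM t, of "\<lambda>xs. Y xs - c"] E t
    by (smt (verit) divide_right_mono zero_le_power2)
  show "measure_pmf.prob ?M {xs. Y xs \<le> c - t} \<le> V / t^2"
    by (rule order.trans[OF _ ch], rule measure_pmf.finite_measure_mono) auto
  show "measure_pmf.prob ?M {xs. c + t \<le> Y xs} \<le> V / t^2"
    by (rule order.trans[OF _ ch], rule measure_pmf.finite_measure_mono) auto
qed



definition cnt :: "nat set \<Rightarrow> nat list \<Rightarrow> nat" where
  "cnt S xs = length (filter (\<lambda>x. x \<in> S) xs)"

lemma mgf_nn:
  fixes D :: "nat pmf"
  shows "(\<integral>\<^sup>+xs. ennreal (exp (l * real (cnt S xs))) \<partial>replicate_pmf m D)
       = ennreal ((1 + measure_pmf.prob D S * (exp l - 1)) ^ m)"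
proof (induction m)
  case 0
  then show ?case by (simp add: cnt_def)
next
  case (Suc m)
  let ?a = "\<lambda>x::nat. exp (l * (if x \<in> S then 1 else 0))"
  have ea: "(\<integral>\<^sup>+x. ennreal (?a x) \<partial>D) = ennreal (1 + measure_pmf.prob D S * (exp l - 1))"
  proof -
    have "(\<integral>\<^sup>+x. ennreal (?a x) \<partial>D) = ennreal (\<integral>x. ?a x \<partial>D)"
      by (intro nn_integral_eq_integral measure_pmf.integrable_const_bound[where B="exp \<bar>l\<bar>"]) auto
    also have "(\<integral>x. ?a x \<partial>D) = (\<integral>x. 1 + (exp l - 1) * indicator S x \<partial>D)"
      by (intro Bochner_Integration.integral_cong) (auto simp: indicator_def)
    also have "(\<integral>x. 1 + (exp l - 1) * indicator S x \<partial>D) = 1 + measure_pmf.prob D S * (exp l - 1)"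
    proof -
      have "(\<integral>x. 1 + (exp l - 1) * indicator S x \<partial>D) = (\<integral>x. 1 \<partial>D) + (\<integral>x. (exp l - 1) * indicator S x \<partial>D)"
        by (rule Bochner_Integration.integral_add) (auto intro!: integrable_mult_right measure_pmf.integrable_const_bound[where B=1])
      also have "(\<integral>x. (exp l - 1) * indicator S x \<partial>D) = (exp l - 1) * measure_pmf.prob D S"
        by simp
      finally show ?thesis by (simp add: algebra_simps)
    qed
    finally show ?thesis .
  qed
  have split: "ennreal (exp (l * real (cnt S (x # xs)))) = ennreal (?a x) * ennreal (exp (l * real (cnt S xs)))" for x xs
    by (simp add: cnt_def ennreal_mult[symmetric] exp_add[symmetric] algebra_simps)
  have "(\<integral>\<^sup>+xs. ennreal (exp (l * real (cnt S xs))) \<partial>replicate_pmf (Suc m) D)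
      = (\<integral>\<^sup>+x. \<integral>\<^sup>+xs. ennreal (?a x) * ennreal (exp (l * real (cnt S xs))) \<partial>replicate_pmf m D \<partial>D)"
    by (simp add: split[symmetric] nn_integral_return)
  also have "\<dots> = (\<integral>\<^sup>+x. ennreal (?a x) * ennreal ((1 + measure_pmf.prob D S * (exp l - 1)) ^ m) \<partial>D)"
    by (simp add: nn_integral_cmult Suc)
  also have "\<dots> = ennreal (1 + measure_pmf.prob D S * (exp l - 1)) * ennreal ((1 + measure_pmf.prob D S * (exp l - 1)) ^ m)"
    by (simp add: nn_integral_multc ea)
  also have "\<dots> = ennreal ((1 + measure_pmf.prob D S * (exp l - 1)) ^ Suc m)"
  proof -
    have "0 \<le> 1 + measure_pmf.prob D S * (exp l - 1)"
    proof (cases "l \<ge> 0")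
      case True then show ?thesis by simp
    next
      case False
      have "measure_pmf.prob D S * (1 - exp l) \<le> 1 * 1"
        using False by (intro mult_mono) auto
      then show ?thesis by (simp add: algebra_simps)
    qed
    then show ?thesis by (simp add: ennreal_mult[symmetric])
  qed
  finally show ?case .
qed

lemma mgf:
  fixes D :: "nat pmf"
  assumes fin: "finite (set_pmf D)"
  shows "measure_pmf.expectation (replicate_pmf m D) (\<lambda>xs. exp (l * real (cnt S xs)))
       = (1 + measure_pmf.prob D S * (exp l - 1)) ^ m"
proof -
  have finM: "finite (set_pmf (replicate_pmf m D))" using fin by (rule finite_set_replicate_pmf)
  have "ennreal (measure_pmf.expectation (replicate_pmf m D) (\<lambda>xs. exp (l * real (cnt S xs))))
     = (\<integral>\<^sup>+xs. ennreal (exp (l * real (cnt S xs))) \<partial>replicate_pmf m D)"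
    by (intro nn_integral_eq_integral[symmetric] integrable_measure_pmf_finite finM) auto
  also have "\<dots> = ennreal ((1 + measure_pmf.prob D S * (exp l - 1)) ^ m)" by (rule mgf_nn)
  finally have "ennreal (measure_pmf.expectation (replicate_pmf m D) (\<lambda>xs. exp (l * real (cnt S xs))))
     = ennreal ((1 + measure_pmf.prob D S * (exp l - 1)) ^ m)" .
  moreover have "0 \<le> measure_pmf.expectation (replicate_pmf m D) (\<lambda>xs. exp (l * real (cnt S xs)))"
    by (intro integral_nonneg_AE) auto
  moreover have "0 \<le> 1 + measure_pmf.prob D S * (exp l - 1)"
  proof (cases "l \<ge> 0")
    case True then show ?thesis by simp
  next
    case False
    have "measure_pmf.prob D S * (1 - exp l) \<le> 1 * 1"
      using False by (intro mult_mono) auto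
    then show ?thesis by (simp add: algebra_simps)
  qed
  ultimately show ?thesis by simp
qed

lemma markov_exp:
  fixes D :: "nat pmf"
  assumes fin: "finite (set_pmf D)"
  shows "measure_pmf.prob (replicate_pmf m D) {xs. exp (l * a) \<le> exp (l * real (cnt S xs))}
      \<le> (1 + measure_pmf.prob D S * (exp l - 1)) ^ m / exp (l * a)"
proof -
  have finM: "finite (set_pmf (replicate_pmf m D))" using fin by (rule finite_set_replicate_pmf)
  have "measure_pmf.prob (replicate_pmf m D) {xs. exp (l * a) \<le> exp (l * real (cnt S xs))}
     \<le> measure_pmf.expectation (replicate_pmf m D) (\<lambda>xs. exp (l * real (cnt S xs))) / exp (l * a)"
    using integral_Markov_inequality_measure[of "measure_pmf (replicate_pmf m D)" "\<lambda>xs. exp (l * real (cnt S xs))" UNIV "exp (l * a)"]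
    by (simp add: integrable_measure_pmf_finite[OF finM])
  then show ?thesis by (simp add: mgf[OF fin])
qed

lemma pow_le_exp:
  assumes "0 \<le> 1 + (y::real)"
  shows "(1 + y) ^ m \<le> exp (real m * y)"
proof -
  have "(1 + y) ^ m \<le> (exp y) ^ m"
    using assms by (intro power_mono) (auto simp: add.commute exp_ge_add_one_self)
  then show ?thesis by (simp add: exp_of_nat_mult[symmetric])
qed

lemma chernoff_upper:
  fixes D :: "nat pmf"
  assumes fin: "finite (set_pmf D)" and pi: "measure_pmf.prob D S \<le> pu"
    and t: "0 < t" "t \<le> pu"
  shows "measure_pmf.prob (replicate_pmf m D) {xs. real m * (pu + t) \<le> real (cnt S xs)}
      \<le> exp (- real m * t^2 / (4 * pu))"
proof -
  define l where "l = t / (2 * pu)"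
  have pu: "pu > 0" using t by simp
  have l0: "0 < l" and l1: "l \<le> 1" using t pu by (auto simp: l_def field_simps)
  let ?a = "real m * (pu + t)"
  let ?pi = "measure_pmf.prob D S"
  have "measure_pmf.prob (replicate_pmf m D) {xs. ?a \<le> real (cnt S xs)}
      \<le> measure_pmf.prob (replicate_pmf m D) {xs. exp (l * ?a) \<le> exp (l * real (cnt S xs))}"
    using l0 by (intro measure_pmf.finite_measure_mono) auto
  also have "\<dots> \<le> (1 + ?pi * (exp l - 1)) ^ m / exp (l * ?a)"
    by (rule markov_exp[OF fin])
  also have "\<dots> \<le> exp (real m * (?pi * (exp l - 1))) / exp (l * ?a)"
    using l0 by (intro divide_right_mono pow_le_exp) auto
  also have "\<dots> \<le> exp (real m * (pu * (l + l^2))) / exp (l * ?a)"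
  proof -
    have "exp l - 1 \<le> l + l^2" using exp_bound[of l] l0 l1 by simp
    moreover have "0 \<le> exp l - 1" using l0 by simp
    ultimately have "?pi * (exp l - 1) \<le> pu * (l + l^2)"
      using pi pu by (intro mult_mono) auto
    then show ?thesis by (intro divide_right_mono) (auto intro!: mult_left_mono)
  qed
  also have "\<dots> = exp (real m * (pu * (l + l^2)) - l * ?a)"
    by (simp add: exp_diff)
  also have "real m * (pu * (l + l^2)) - l * ?a = - real m * t^2 / (4 * pu)"
    using pu by (simp add: l_def power2_eq_square field_simps)
  finally show ?thesis .
qed

lemma chernoff_lower:
  fixes D :: "nat pmf"
  assumes fin: "finite (set_pmf D)" and pi: "pl \<le> measure_pmf.prob D S"
    and pl: "0 < pl" and t: "0 \<le> t"
  shows "measure_pmf.prob (replicate_pmf m D) {xs. real (cnt S xs) \<le> real m * (pl - t)}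
      \<le> exp (- real m * t^2 / (4 * pl))"
proof -
  define l where "l = t / (2 * pl)"
  have l0: "0 \<le> l" using t pl by (auto simp: l_def)
  let ?a = "real m * (pl - t)"
  let ?pi = "measure_pmf.prob D S"
  have "measure_pmf.prob (replicate_pmf m D) {xs. real (cnt S xs) \<le> ?a}
      \<le> measure_pmf.prob (replicate_pmf m D) {xs. exp ((-l) * ?a) \<le> exp ((-l) * real (cnt S xs))}"
    using l0 by (intro measure_pmf.finite_measure_mono) (auto intro: mult_left_mono)
  also have "\<dots> \<le> (1 + ?pi * (exp (-l) - 1)) ^ m / exp ((-l) * ?a)"
    by (rule markov_exp[OF fin])
  also have "\<dots> \<le> exp (real m * (?pi * (exp (-l) - 1))) / exp ((-l) * ?a)"
  proof -
    have "?pi * (1 - exp (-l)) \<le> 1 * 1"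
      using l0 by (intro mult_mono) auto
    then have "0 \<le> 1 + ?pi * (exp (-l) - 1)" by (simp add: algebra_simps)
    then show ?thesis by (intro divide_right_mono pow_le_exp) auto
  qed
  also have "\<dots> \<le> exp (real m * (pl * (-l + l^2))) / exp ((-l) * ?a)"
  proof -
    have e1: "exp (-l) \<le> 1 / (1 + l)"
    proof -
      have "1 + l \<le> exp l" by (rule exp_ge_add_one_self)
      then have "exp (-l) * (1 + l) \<le> exp (-l) * exp l" by (intro mult_left_mono) auto
      then show ?thesis using l0 by (simp add: field_simps exp_minus)
    qed
    have "1 / (1 + l) - 1 \<le> - l + l^2"
      using l0 by (simp add: field_simps power2_eq_square)
    then have e2: "exp (-l) - 1 \<le> -l + l^2" using e1 by simp
    have "?pi * (exp (-l) - 1) \<le> pl * (exp (-l) - 1)"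
      using pi l0 by (intro mult_right_mono_neg) auto
    also have "\<dots> \<le> pl * (-l + l^2)" using e2 pl by (intro mult_left_mono) auto
    finally show ?thesis by (intro divide_right_mono) (auto intro!: mult_left_mono)
  qed
  also have "\<dots> = exp (real m * (pl * (-l + l^2)) + l * ?a)"
    by (simp add: exp_diff[symmetric] algebra_simps)
  also have "real m * (pl * (-l + l^2)) + l * ?a = - real m * t^2 / (4 * pl)"
    using pl by (simp add: l_def power2_eq_square field_simps)
  finally show ?thesis .
qed



definition hh :: "nat \<Rightarrow> real \<Rightarrow> real" where
  "hh s p = 1 - (1 - p) ^ s + real s * p * (1 - p) ^ (s - 1)"

definition d2 :: "nat \<Rightarrow> real \<Rightarrow> real" where
  "d2 s p = 2 * real s * (1 - p) ^ (s - 1) - real s * real (s - 1) * p * (1 - p) ^ (s - 2)"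

lemma phi_deriv: "((\<lambda>p. p * Fq s p) has_real_derivative hh s p) (at p)"
  unfolding Fq_def hh_def
  by (rule derivative_eq_intros refl | simp)+

lemma hh_deriv: "(hh s has_real_derivative d2 s p) (at p)"
proof -
  have "((\<lambda>p. 1 - (1 - p) ^ s + real s * p * (1 - p) ^ (s - 1)) has_real_derivative d2 s p) (at p)"
    unfolding d2_def
    by (rule derivative_eq_intros refl | simp)+ (simp add: algebra_simps numeral_2_eq_2)
  then show ?thesis unfolding hh_def[abs_def] .
qed

lemma exp2_le9: "exp (2::real) \<le> 9"
proof -
  have "exp (1::real) \<le> 3" using exp_bound[of 1] by simp
  then have "exp (1::real) * exp 1 \<le> 3 * 3" by (intro mult_mono) auto
  then show ?thesis by (simp add: exp_add[symmetric])
qed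

lemma pow_ge_ninth:
  assumes n: "n \<ge> 2"
  shows "(1 - 1 / real n) ^ n \<ge> 1/9"
proof -
  let ?x = "1 / real n"
  have x0: "0 \<le> ?x" and x1: "?x \<le> 1/2" using n by (auto simp: field_simps)
  have lnb: "- ?x - 2 * ?x^2 \<le> ln (1 - ?x)" by (rule ln_one_minus_pos_lower_bound[OF x0 x1])
  have pos: "0 < 1 - ?x" using x1 by simp
  have e: "(1 - ?x) ^ n = exp (real n * ln (1 - ?x))"
    using pos by (subst exp_of_nat_mult) simp
  have "real n * ln (1 - ?x) \<ge> real n * (- ?x - 2 * ?x^2)"
    using lnb by (intro mult_left_mono) auto
  moreover have "real n * (- ?x - 2 * ?x^2) \<ge> -2"
    using n by (simp add: field_simps power2_eq_square)
  ultimately have "exp (real n * ln (1 - ?x)) \<ge> exp (-2)" by simp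
  moreover have "exp (-2::real) \<ge> 1/9"
    using exp2_le9 by (simp add: exp_minus field_simps)
  ultimately show ?thesis using e by linarith
qed

lemma d2_form:
  assumes "s \<ge> 2"
  shows "d2 s u = real s * (1 - u) ^ (s - 2) * (2 - (real s + 1) * u)"
proof -
  have "(1 - u) ^ (s - 1) = (1 - u) * (1 - u) ^ (s - 2)"
    using assms by (metis Suc_diff_Suc Suc_1 diff_Suc_1 le_eq_less_or_eq Suc_le_lessD power_Suc)
  moreover have "real (s - 1) = real s - 1" using assms by simp
  ultimately show ?thesis unfolding d2_def by (simp only:) (simp add: algebra_simps)
qed

lemma d2_lower:
  assumes n: "n \<ge> 2" and s: "1 \<le> s" "s \<le> n" and u: "0 \<le> u" "u \<le> 1 / real n"
  shows "d2 s u \<ge> real s / 18"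
proof (cases "s = 1")
  case True
  then show ?thesis by (simp add: d2_def)
next
  case False
  then have s2: "s \<ge> 2" using s by simp
  have q1: "1 / real n \<le> 1/2" using n by (simp add: field_simps)
  have "(1 - u) ^ (s - 2) \<ge> (1 - 1 / real n) ^ (s - 2)"
    using u q1 by (intro power_mono) auto
  moreover have "(1 - 1 / real n) ^ (s - 2) \<ge> (1 - 1 / real n) ^ n"
    using q1 n s by (intro power_decreasing) auto
  ultimately have a: "(1 - u) ^ (s - 2) \<ge> 1/9" using pow_ge_ninth[OF n] by linarith
  have "(real s + 1) * u \<le> (real n + 1) * (1 / real n)"
    using u s by (intro mult_mono) auto
  also have "\<dots> = 1 + 1 / real n" using n by (simp add: field_simps)
  finally have b: "2 - (real s + 1) * u \<ge> 1/2" using q1 by linarith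
  have "real s * (1/9) * (1/2) \<le> real s * (1 - u) ^ (s - 2) * (2 - (real s + 1) * u)"
    using a b by (intro mult_mono) auto
  then show ?thesis using d2_form[OF s2] by simp
qed

definition Lq :: "nat \<Rightarrow> real \<Rightarrow> real" where
  "Lq s q = Fq s q + real s * q * (1 - q) ^ (s - 1)"

definition Dq :: "nat \<Rightarrow> real \<Rightarrow> real \<Rightarrow> real" where
  "Dq s q p = p * Fq s p - q * Fq s q - Lq s q * (p - q)"

lemma hh_Lq: "hh s q = Lq s q"
  unfolding hh_def Lq_def Fq_def by simp

lemma Dq_deriv: "(Dq s q has_real_derivative (hh s p - Lq s q)) (at p)"
proof -
  have "((\<lambda>p. p * Fq s p - q * Fq s q - Lq s q * (p - q)) has_real_derivative (hh s p - 0 - Lq s q * (1 - 0))) (at p)"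
    by (intro derivative_intros phi_deriv) (auto intro!: derivative_eq_intros)
  then show ?thesis unfolding Dq_def[abs_def] by simp
qed

lemma Dq_light:
  assumes n: "n \<ge> 2" and s: "1 \<le> s" "s \<le> n" and q: "q = 1 / real n" and p: "0 \<le> p" "p \<le> q"
  shows "Dq s q p \<ge> real s / 36 * (q - p)^2"
proof -
  define k where "k u = hh s u - real s / 18 * u" for u
  have kmono: "k t \<le> k q" if "p \<le> t" "t \<le> q" for t
  proof (rule DERIV_nonneg_imp_nondecreasing[OF that(2)])
    fix x assume x: "t \<le> x" "x \<le> q"
    have "(k has_real_derivative (d2 s x - real s / 18 * 1)) (at x)"
      unfolding k_def[abs_def] by (intro derivative_intros hh_deriv) (auto intro!: derivative_eq_intros)
    moreover have "d2 s x \<ge> real s / 18"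
      using d2_lower[OF n s, of x] x that p q by auto
    ultimately show "\<exists>y. (k has_real_derivative y) (at x) \<and> 0 \<le> y" by auto
  qed
  define g where "g u = Dq s q u - real s / 36 * (q - u)^2" for u
  have "g q \<le> g p"
  proof (rule DERIV_nonpos_imp_nonincreasing[OF p(2)])
    fix x assume x: "p \<le> x" "x \<le> q"
    have "(g has_real_derivative (hh s x - Lq s q - real s / 36 * (2 * (q - x) * (0 - 1)))) (at x)"
      unfolding g_def[abs_def] by (rule derivative_eq_intros Dq_deriv refl | simp)+
    moreover have "hh s x - Lq s q - real s / 36 * (2 * (q - x) * (0 - 1)) \<le> 0"
      using kmono[OF x] unfolding k_def hh_Lq by (simp add: algebra_simps)
    ultimately show "\<exists>y. (g has_real_derivative y) (at x) \<and> y \<le> 0" by auto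
  qed
  moreover have "g q = 0" unfolding g_def Dq_def by simp
  ultimately show ?thesis unfolding g_def by simp
qed

lemma Dq_heavy:
  assumes n: "n \<ge> 2" and s: "1 \<le> s" "s \<le> n" and q: "q = 1 / real n" and p: "q \<le> p" "p \<le> 1"
  shows "Dq s q p \<ge> 0"
proof (cases "s = 1")
  case True
  then have "Dq s q p = (p - q)^2"
    by (simp add: Dq_def Fq_def Lq_def power2_eq_square algebra_simps)
  then show ?thesis by simp
next
  case False
  then have s2: "s \<ge> 2" using s by simp
  define p0 where "p0 = 2 / (real s + 1)"
  have q0: "0 < q" using q n by simp
  have qsn: "q * real s \<le> q * real n" using q0 s by (intro mult_left_mono) auto
  have qn1: "q * real n = 1" using q n by simp
  note qsn qn1
  moreover have "q \<le> 1" using q n by simp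
  ultimately have "q * (real s + 1) \<le> 2" by (simp add: algebra_simps)
  then have qp0: "q \<le> p0" by (simp add: p0_def pos_le_divide_eq)
  have p01: "p0 \<le> 1" using s2 by (simp add: p0_def field_simps)
  have d2pos: "d2 s u \<ge> 0" if "0 \<le> u" "u \<le> p0" for u
  proof -
    have "(real s + 1) * u \<le> (real s + 1) * p0" using that by (intro mult_left_mono) auto
    moreover have "(real s + 1) * p0 = 2" unfolding p0_def by (simp add: field_simps)
    ultimately have "2 - (real s + 1) * u \<ge> 0" by simp
    moreover have "(1 - u) ^ (s - 2) \<ge> 0" using that p01 by simp
    ultimately show ?thesis using d2_form[OF s2] by simp
  qed
  have d2neg: "d2 s u \<le> 0" if "p0 \<le> u" "u \<le> 1" for u
  proof -
    have "(real s + 1) * p0 \<le> (real s + 1) * u" using that by (intro mult_left_mono) auto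
    moreover have "(real s + 1) * p0 = 2" unfolding p0_def by (simp add: field_simps)
    ultimately have "2 - (real s + 1) * u \<le> 0" by simp
    moreover have "(1 - u) ^ (s - 2) \<ge> 0" using that by simp
    ultimately show ?thesis using d2_form[OF s2] by (simp add: mult_nonneg_nonpos)
  qed
  have hinc: "hh s q \<le> hh s t" if "q \<le> t" "t \<le> p0" for t
    by (rule DERIV_nonneg_imp_nondecreasing[OF that(1)]) (use hh_deriv d2pos q0 that in force)
  have hdec: "hh s b \<le> hh s a" if "p0 \<le> a" "a \<le> b" "b \<le> 1" for a b
    by (rule DERIV_nonpos_imp_nonincreasing[OF that(2)]) (use hh_deriv d2neg that in force)
  have Dq0: "Dq s q q = 0" by (simp add: Dq_def)
  have Dq1: "Dq s q 1 \<ge> 0"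
  proof -
    have e: "(1 - q) ^ s = (1 - q) * (1 - q) ^ (s - 1)"
      using s by (metis Suc_diff_1 less_le_trans zero_less_one power_Suc)
    have "Dq s q 1 = (1 - q) ^ s * (1 - real s * q)"
      using s unfolding Dq_def Fq_def Lq_def e by (simp add: algebra_simps zero_power)
    moreover have "real s * q \<le> 1" using qsn qn1 by (simp add: algebra_simps)
    moreover have "0 \<le> (1 - q) ^ s" using q n by simp
    ultimately show ?thesis by simp
  qed
  have incr: "Dq s q q \<le> Dq s q p" if "\<And>t. q \<le> t \<Longrightarrow> t \<le> p \<Longrightarrow> hh s q \<le> hh s t"
    by (rule DERIV_nonneg_imp_nondecreasing[OF p(1)]) (use Dq_deriv that hh_Lq in force)
  show ?thesis
  proof (cases "p \<le> p0")
    case True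
    then show ?thesis using incr hinc Dq0 by force
  next
    case False
    show ?thesis
    proof (cases "hh s q \<le> hh s p")
      case True
      have "hh s q \<le> hh s t" if "q \<le> t" "t \<le> p" for t
      proof (cases "t \<le> p0")
        case True then show ?thesis using hinc that by auto
      next
        case False then show ?thesis using hdec[of t p] that p \<open>hh s q \<le> hh s p\<close> by auto
      qed
      then show ?thesis using incr Dq0 by force
    next
      case hlt: False
      have "Dq s q 1 \<le> Dq s q p"
      proof (rule DERIV_nonpos_imp_nonincreasing[OF p(2)])
        fix x assume x: "p \<le> x" "x \<le> 1"
        have "hh s x \<le> hh s p" using hdec[of p x] x False by auto
        then show "\<exists>y. (Dq s q has_real_derivative y) (at x) \<and> y \<le> 0"
          using Dq_deriv[of s q x] hlt hh_Lq[of s q] by auto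
      qed
      then show ?thesis using Dq1 by simp
    qed
  qed
qed



lemma Fq_le_sp: "0 \<le> p \<Longrightarrow> p \<le> 1 \<Longrightarrow> Fq s p \<le> real s * p"
  unfolding Fq_def using Bernoulli_inequality[of "-p" s] by simp

lemma pow_le_inv: 
  assumes "0 \<le> p" "p \<le> 1"
  shows "(1 - p) ^ s \<le> 1 / (1 + real s * p)"
proof -
  have "(1 - p) ^ s * (1 + p) ^ s = (1 - p^2) ^ s"
    by (simp add: power_mult_distrib[symmetric] power2_eq_square algebra_simps)
  also have "\<dots> \<le> 1" using assms by (intro power_le_one) (auto simp: power_le_one)
  finally have a: "(1 - p) ^ s * (1 + p) ^ s \<le> 1" .
  have b: "1 + real s * p \<le> (1 + p) ^ s" using Bernoulli_inequality[of p s] assms by simp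
  have "(1 - p) ^ s * (1 + real s * p) \<le> (1 - p) ^ s * (1 + p) ^ s"
    using b assms by (intro mult_left_mono) auto
  with a have "(1 - p) ^ s * (1 + real s * p) \<le> 1" by linarith
  moreover have "0 < 1 + real s * p" using assms by (smt (verit) mult_nonneg_nonneg of_nat_0_le_iff)
  ultimately show ?thesis by (simp add: field_simps)
qed

lemma Fq_ge: "0 \<le> p \<Longrightarrow> p \<le> 1 \<Longrightarrow> Fq s p \<ge> real s * p / (1 + real s * p)"
proof -
  assume a: "0 \<le> p" "p \<le> 1"
  have pos: "0 < 1 + real s * p" using a by (smt (verit) mult_nonneg_nonneg of_nat_0_le_iff)
  have "Fq s p \<ge> 1 - 1 / (1 + real s * p)" unfolding Fq_def using pow_le_inv[OF a] by simp
  also have "1 - 1 / (1 + real s * p) = real s * p / (1 + real s * p)" using pos by (simp add: field_simps)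
  finally show ?thesis .
qed

lemma var_le_p_over_s:
  assumes "0 \<le> p" "p \<le> 1" "s \<ge> 1"
  shows "p^2 * (Fq s p * (1 - Fq s p)) \<le> p / real s"
proof -
  have F0: "0 \<le> Fq s p" and F1: "Fq s p \<le> 1" using assms Fq_nonneg Fq_le1 by auto
  have "Fq s p * (1 - Fq s p) \<le> 1 - Fq s p" using F0 F1 by (simp add: mult_left_le_one_le)
  also have "\<dots> = (1 - p) ^ s" by (simp add: Fq_def)
  also have "\<dots> \<le> 1 / (1 + real s * p)" by (rule pow_le_inv) (use assms in auto)
  finally have a: "Fq s p * (1 - Fq s p) \<le> 1 / (1 + real s * p)" .
  have pos: "0 < 1 + real s * p" using assms by (smt (verit) mult_nonneg_nonneg of_nat_0_le_iff)
  have "p^2 * (Fq s p * (1 - Fq s p)) \<le> p^2 * (1 / (1 + real s * p))"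
    using a by (intro mult_left_mono) auto
  also have "\<dots> \<le> p / real s"
    using assms pos by (simp add: field_simps power2_eq_square)
  finally show ?thesis .
qed

lemma var_le_sp3:
  assumes "0 \<le> p" "p \<le> 1"
  shows "p^2 * (Fq s p * (1 - Fq s p)) \<le> real s * p^3"
proof -
  have F0: "0 \<le> Fq s p" and F1: "Fq s p \<le> 1" using assms Fq_nonneg Fq_le1 by auto
  have "Fq s p * (1 - Fq s p) \<le> Fq s p * 1" using F0 F1 by (intro mult_left_mono) auto
  also have "\<dots> \<le> real s * p" using Fq_le_sp[of p s] assms by simp
  finally have "p^2 * (Fq s p * (1 - Fq s p)) \<le> p^2 * (real s * p)" by (intro mult_left_mono) auto
  then show ?thesis by (simp add: power3_eq_cube power2_eq_square algebra_simps)
qed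

lemma Lq_bounds:
  assumes "0 \<le> q" "q \<le> 1"
  shows "Lq s q \<le> 2 * real s * q" and "Fq s q \<le> Lq s q" and "0 \<le> Lq s q"
proof -
  have a: "Fq s q \<le> real s * q" by (rule Fq_le_sp) (use assms in auto)
  have b: "real s * q * (1 - q) ^ (s - 1) \<le> real s * q * 1"
    using assms by (intro mult_left_mono power_le_one) auto
  have c: "0 \<le> real s * q * (1 - q) ^ (s - 1)" using assms by simp
  show "Lq s q \<le> 2 * real s * q" unfolding Lq_def using a b by simp
  show "Fq s q \<le> Lq s q" unfolding Lq_def using c by simp
  show "0 \<le> Lq s q" unfolding Lq_def using c Fq_nonneg[OF assms] by simp
qed

lemma Dq_ge_simple:
  assumes "0 \<le> p" "p \<le> 1" "0 \<le> q" "q \<le> 1"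
  shows "Dq s q p \<ge> p * (Fq s p - 2 * real s * q)"
proof -
  have "q * Fq s q \<le> q * Lq s q" using Lq_bounds(2)[OF assms(3,4)] assms by (intro mult_left_mono) auto
  moreover have "Lq s q * p \<le> 2 * real s * q * p" using Lq_bounds(1)[OF assms(3,4)] assms by (intro mult_right_mono) auto
  ultimately show ?thesis unfolding Dq_def by (simp add: algebra_simps)
qed

lemma term_lower:
  assumes "0 \<le> p" "p \<le> 1" "0 \<le> q" "q \<le> 1" "0 \<le> b"
  shows "p * b - q * Fq s q - Lq s q * (p - q) \<ge> - (2 * real s * q * p)"
proof -
  have "q * Fq s q \<le> q * Lq s q" using Lq_bounds(2)[OF assms(3,4)] assms by (intro mult_left_mono) auto
  moreover have "Lq s q * p \<le> 2 * real s * q * p" using Lq_bounds(1)[OF assms(3,4)] assms by (intro mult_right_mono) auto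
  moreover have "0 \<le> p * b" using assms by simp
  ultimately show ?thesis by (simp add: algebra_simps)
qed

lemma Fq_concave:
  assumes "0 \<le> p" "p \<le> 1" "0 \<le> q" "q < 1"
  shows "Fq s p \<le> Fq s q + real s * (1 - q) ^ (s - 1) * (p - q)"
proof (cases "s = 0")
  case True then show ?thesis by (simp add: Fq_def)
next
  case False
  let ?x = "1 - q" and ?y = "1 - p"
  have x0: "?x > 0" using assms by simp
  have "1 + real s * (?y / ?x - 1) \<le> (1 + (?y / ?x - 1)) ^ s"
    by (rule Bernoulli_inequality) (use assms x0 in simp)
  then have "1 + real s * (?y / ?x - 1) \<le> (?y / ?x) ^ s" by simp
  then have "?x ^ s * (1 + real s * (?y / ?x - 1)) \<le> ?x ^ s * (?y / ?x) ^ s"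
    using x0 by (intro mult_left_mono) auto
  also have "?x ^ s * (?y / ?x) ^ s = ?y ^ s" using x0 by (simp add: power_divide)
  finally have a: "?x ^ s * (1 + real s * (?y / ?x - 1)) \<le> ?y ^ s" .
  have e: "?x ^ s = ?x * ?x ^ (s - 1)" using False by (metis power_eq_if)
  have "?x ^ s * (1 + real s * (?y / ?x - 1)) = ?x ^ s + real s * ?x ^ (s - 1) * (?y - ?x)"
    using x0 unfolding e by (simp add: field_simps)
  with a have "?x ^ s + real s * ?x ^ (s - 1) * (?y - ?x) \<le> ?y ^ s" by simp
  then show ?thesis unfolding Fq_def by (simp add: algebra_simps)
qed



lemma prob_as_sum:
  fixes P :: "nat pmf"
  assumes supp: "set_pmf P \<subseteq> X" and fin: "finite X"
  shows "measure_pmf.prob P S = (\<Sum>x\<in>X. pmf P x * indicator S x)"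
proof -
  have "measure_pmf.prob P S = measure_pmf.prob P (S \<inter> X)"
    using supp by (metis measure_Int_set_pmf inf.absorb_iff2 inf_assoc inf_commute)
  also have "\<dots> = (\<Sum>x\<in>S \<inter> X. pmf P x)"
    using fin by (simp add: measure_pmf.finite_measure_eq_sum_singleton measure_pmf_single)
  also have "\<dots> = (\<Sum>x\<in>X. pmf P x * indicator S x)"
    using fin by (simp add: sum.inter_restrict[symmetric] indicator_def Int_commute if_distrib cong: if_cong)
  finally show ?thesis .
qed

lemma unif_pmf: "x \<in> {1..n} \<Longrightarrow> pmf (unif n) x = 1 / real n"
  by (auto simp: unif_def)

lemma light_mass:
  fixes P :: "nat pmf"
  assumes n: "n \<ge> 1" and supp: "set_pmf P \<subseteq> {1..n}" and dtv: "dTV n P (unif n) \<ge> \<epsilon>"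
  defines "q \<equiv> 1 / real n"
  shows "(\<Sum>x\<in>{x\<in>{1..n}. pmf P x < q}. q - pmf P x) \<ge> \<epsilon>"
proof -
  let ?X = "{1..n}" and ?L = "{x\<in>{1..n}. pmf P x < q}"
  let ?d = "\<lambda>x. pmf P x - q"
  have s1: "(\<Sum>x\<in>?X. pmf P x) = 1" by (rule sum_pmf_eq_1) (use supp in auto)
  have "(\<Sum>x\<in>?X. q) = 1" using n by (simp add: q_def)
  then have sd: "(\<Sum>x\<in>?X. ?d x) = 0" using s1 by (simp add: sum_subtractf)
  have split: "(\<Sum>x\<in>?X. f x) = (\<Sum>x\<in>?L. f x) + (\<Sum>x\<in>?X - ?L. f x)" for f :: "nat \<Rightarrow> real"
    by (subst sum.subset_diff[of ?L ?X]) auto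
  have abs_split: "(\<Sum>x\<in>?X. \<bar>?d x\<bar>) = (\<Sum>x\<in>?L. q - pmf P x) + (\<Sum>x\<in>?X - ?L. ?d x)"
    by (subst split) (auto intro!: arg_cong2[where f="(+)"] sum.cong)
  have "(\<Sum>x\<in>?L. ?d x) + (\<Sum>x\<in>?X - ?L. ?d x) = 0" using sd split[of ?d] by simp
  then have "(\<Sum>x\<in>?X - ?L. ?d x) = (\<Sum>x\<in>?L. q - pmf P x)"
    by (simp add: sum_subtractf sum_negf[symmetric])
  then have "(\<Sum>x\<in>?X. \<bar>?d x\<bar>) = 2 * (\<Sum>x\<in>?L. q - pmf P x)" using abs_split by simp
  moreover have "dTV n P (unif n) = (1/2) * (\<Sum>x\<in>?X. \<bar>?d x\<bar>)"
    unfolding dTV_def q_def by (intro arg_cong2[where f="(*)"] sum.cong) (auto simp: unif_pmf)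
  ultimately show ?thesis using dtv by simp
qed

lemma sum_sq_lower:
  fixes a :: "nat \<Rightarrow> real"
  assumes "finite L" "card L \<le> n" "e \<le> (\<Sum>x\<in>L. a x)" "0 \<le> e"
  shows "e^2 / real n \<le> (\<Sum>x\<in>L. (a x)^2)"
proof -
  have "(\<Sum>x\<in>L. a x * 1)^2 \<le> (\<Sum>x\<in>L. (a x)^2) * (\<Sum>x\<in>L. 1^2)" by (rule Cauchy_Schwarz_ineq_sum)
  then have cs: "(\<Sum>x\<in>L. a x)^2 \<le> (\<Sum>x\<in>L. (a x)^2) * real (card L)" by simp
  have "e^2 \<le> (\<Sum>x\<in>L. a x)^2" using assms by (intro power_mono) auto
  also have "\<dots> \<le> (\<Sum>x\<in>L. (a x)^2) * real (card L)" by (rule cs)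
  also have "\<dots> \<le> (\<Sum>x\<in>L. (a x)^2) * real n"
    using assms by (intro mult_left_mono) (auto intro: sum_nonneg)
  finally have "e^2 \<le> (\<Sum>x\<in>L. (a x)^2) * real n" .
  then show ?thesis
    by (cases "n = 0") (auto simp: field_simps intro: sum_nonneg)
qed

lemma card_as_sum:
  assumes "finite X" "set (xs::nat list) \<subseteq> X"
  shows "real (card (set xs)) = (\<Sum>x\<in>X. 1 * indicator {xs. x \<in> set xs} xs)"
proof -
  define S where "S = set xs"
  have that: "set xs = S" by (simp add: S_def)
  have "S \<subseteq> X" using assms by (simp add: S_def)
  have "(\<Sum>x\<in>X. 1 * indicator {xs. x \<in> set xs} xs) = (\<Sum>x\<in>X. (indicator S x :: real))"
    using that by (intro sum.cong) (auto simp: indicator_def)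
  also have "\<dots> = real (card (X \<inter> S))"
    using assms by (simp add: sum.inter_restrict[symmetric] indicator_def if_distrib cong: if_cong)
  also have "X \<inter> S = S" using \<open>S \<subseteq> X\<close> by auto
  finally show ?thesis by (simp add: S_def)
qed

lemma U_bad:
  fixes P :: "nat pmf" and s n :: nat and \<epsilon> :: real
  assumes n: "n \<ge> 2" and supp: "set_pmf P \<subseteq> {1..n}" and s: "1 \<le> s" "s \<le> n" and eps: "0 < \<epsilon>"
  defines "q \<equiv> 1 / real n"
  defines "\<tau> \<equiv> real s * \<epsilon>^2 / (1024 * real n)"
  shows "measure_pmf.prob (replicate_pmf s P) {xs. real n * (Fq s q + \<tau>) \<le> real (card (set xs))}
      \<le> 2^20 / (real s * \<epsilon>^4)"
proof -
  let ?X = "{1..n}"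
  have fin: "finite (set_pmf P)" using supp finite_subset by blast
  have p01: "0 \<le> pmf P x" "pmf P x \<le> 1" for x by (auto simp: pmf_le_1)
  have q01: "0 \<le> q" "q < 1" using n by (auto simp: q_def)
  have s1: "(\<Sum>x\<in>?X. pmf P x) = 1" by (rule sum_pmf_eq_1) (use supp in auto)
  let ?c = "\<Sum>x\<in>?X. 1 * Fq s (pmf P x)"
  let ?V = "\<Sum>x\<in>?X. 1^2 * (Fq s (pmf P x) * (1 - Fq s (pmf P x)))"
  let ?Y = "\<lambda>xs. \<Sum>x\<in>?X. 1 * indicator {xs. x \<in> set xs} xs"
  have c_le: "?c \<le> real n * Fq s q"
  proof -
    have "?c \<le> (\<Sum>x\<in>?X. Fq s q + real s * (1 - q) ^ (s - 1) * (pmf P x - q))"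
      using Fq_concave p01 q01 by (intro sum_mono) auto
    also have "\<dots> = real n * Fq s q + real s * (1 - q) ^ (s - 1) * ((\<Sum>x\<in>?X. pmf P x) - real n * q)"
      by (simp add: sum.distrib sum_distrib_left[symmetric] sum_distrib_right[symmetric] sum_subtractf algebra_simps)
    also have "\<dots> = real n * Fq s q" using s1 n by (simp add: q_def)
    finally show ?thesis .
  qed
  have V_le: "?V \<le> real s"
  proof -
    have "?V \<le> (\<Sum>x\<in>?X. real s * pmf P x)"
    proof (intro sum_mono)
      fix x
      have F0: "0 \<le> Fq s (pmf P x)" and F1: "Fq s (pmf P x) \<le> 1" using Fq_nonneg Fq_le1 p01 by auto
      have "Fq s (pmf P x) * (1 - Fq s (pmf P x)) \<le> Fq s (pmf P x) * 1" using F0 F1 by (intro mult_left_mono) auto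
      also have "\<dots> \<le> real s * pmf P x" using Fq_le_sp[of "pmf P x" s] p01 by simp
      finally show "1^2 * (Fq s (pmf P x) * (1 - Fq s (pmf P x))) \<le> real s * pmf P x" by simp
    qed
    also have "\<dots> = real s" using s1 by (simp add: sum_distrib_left[symmetric])
    finally show ?thesis .
  qed
  have tpos: "0 < real n * \<tau>" using n s eps by (simp add: \<tau>_def)
  have "measure_pmf.prob (replicate_pmf s P) {xs. real n * (Fq s q + \<tau>) \<le> real (card (set xs))}
      \<le> measure_pmf.prob (replicate_pmf s P) {xs. ?c + real n * \<tau> \<le> ?Y xs}"
  proof (rule prob_mono_pmf)
    fix xs assume xs: "xs \<in> set_pmf (replicate_pmf s P)" "xs \<in> {xs. real n * (Fq s q + \<tau>) \<le> real (card (set xs))}"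
    have "set xs \<subseteq> ?X" using xs(1) supp by (auto simp: set_replicate_pmf)
    then have "real (card (set xs)) = ?Y xs" by (intro card_as_sum) auto
    then show "xs \<in> {xs. ?c + real n * \<tau> \<le> ?Y xs}" using xs(2) c_le by (simp add: algebra_simps)
  qed
  also have "\<dots> \<le> ?V / (real n * \<tau>)^2"
    by (rule cheb_weighted(2)[OF fin _ _ tpos]) auto
  also have "\<dots> \<le> real s / (real n * \<tau>)^2"
    using V_le by (intro divide_right_mono) auto
  also have "real s / (real n * \<tau>)^2 = 2^20 / (real s * \<epsilon>^4)"
    using n s eps by (simp add: \<tau>_def power2_eq_square field_simps power4_eq_xxxx)
  finally show ?thesis .
qed



definition TT :: "nat pmf \<Rightarrow> nat \<Rightarrow> real \<Rightarrow> nat \<Rightarrow> nat list \<Rightarrow> real" where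
  "TT P s q x xs = pmf P x * indicator {xs. x \<in> set xs} xs - q * Fq s q - Lq s q * (pmf P x - q)"

lemma part_cheb:
  fixes P :: "nat pmf"
  assumes fin: "finite (set_pmf P)" and A: "finite A"
    and G: "0 < (\<Sum>x\<in>A. Dq s q (pmf P x))"
  shows "measure_pmf.prob (replicate_pmf s P) {xs. (\<Sum>x\<in>A. TT P s q x xs) \<le> (\<Sum>x\<in>A. Dq s q (pmf P x)) / 2}
     \<le> 4 * (\<Sum>x\<in>A. (pmf P x)^2 * (Fq s (pmf P x) * (1 - Fq s (pmf P x)))) / (\<Sum>x\<in>A. Dq s q (pmf P x))^2"
proof -
  let ?G = "\<Sum>x\<in>A. Dq s q (pmf P x)"
  let ?Y = "\<lambda>xs. \<Sum>x\<in>A. pmf P x * indicator {xs. x \<in> set xs} xs"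
  let ?c = "\<Sum>x\<in>A. pmf P x * Fq s (pmf P x)"
  let ?M = "\<Sum>x\<in>A. q * Fq s q + Lq s q * (pmf P x - q)"
  have eqT: "(\<Sum>x\<in>A. TT P s q x xs) = ?Y xs - ?M" for xs
    unfolding TT_def by (simp add: sum_subtractf sum.distrib algebra_simps)
  have eqG: "?G = ?c - ?M"
    unfolding Dq_def by (simp add: sum_subtractf sum.distrib algebra_simps)
  have "{xs. (\<Sum>x\<in>A. TT P s q x xs) \<le> ?G / 2} = {xs. ?Y xs \<le> ?c - ?G / 2}"
  proof -
    have aux: "((a::real) - m \<le> (c - m) / 2) = (a \<le> c - (c - m) / 2)" for a m c by (simp add: field_simps)
    show ?thesis unfolding eqT eqG aux ..
  qed
  moreover have "measure_pmf.prob (replicate_pmf s P) {xs. ?Y xs \<le> ?c - ?G / 2}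
      \<le> (\<Sum>x\<in>A. (pmf P x)^2 * (Fq s (pmf P x) * (1 - Fq s (pmf P x)))) / (?G / 2)^2"
    using G by (intro cheb_weighted(1)[OF fin A]) auto
  ultimately show ?thesis by (simp add: power2_eq_square field_simps)
qed

lemma TT_sum_identity:
  fixes P :: "nat pmf"
  assumes n: "n \<ge> 1" and supp: "set_pmf P \<subseteq> {1..n}" and q: "q = 1 / real n"
  shows "measure_pmf.prob P (set xs) - Fq s q = (\<Sum>x\<in>{1..n}. TT P s q x xs)"
proof -
  have s1: "(\<Sum>x\<in>{1..n}. pmf P x) = 1" by (rule sum_pmf_eq_1) (use supp in auto)
  have pr: "measure_pmf.prob P (set xs) = (\<Sum>x\<in>{1..n}. pmf P x * indicator (set xs) x)"
    by (rule prob_as_sum) (use supp in auto)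
  have "(\<Sum>x\<in>{1..n}. TT P s q x xs) = (\<Sum>x\<in>{1..n}. pmf P x * indicator (set xs) x)
      - (\<Sum>x\<in>{1..n}. q * Fq s q) - (\<Sum>x\<in>{1..n}. Lq s q * (pmf P x - q))"
    unfolding TT_def by (simp add: sum_subtractf indicator_def)
  also have "(\<Sum>x\<in>{1..n}. Lq s q * (pmf P x - q)) = Lq s q * (\<Sum>x\<in>{1..n}. pmf P x - q)"
    by (simp add: sum_distrib_left)
  also have "(\<Sum>x\<in>{1..n}. q * Fq s q) = Fq s q" using n by (simp add: q)
  also have "(\<Sum>x\<in>{1..n}. pmf P x - q) = 0" using n s1 by (simp add: sum_subtractf q)
  also have "(\<Sum>x\<in>{1..n}. pmf P x * indicator (set xs) x) = measure_pmf.prob P (set xs)"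
    using pr by simp
  finally show ?thesis by simp
qed



locale Pctx =
  fixes P :: "nat pmf" and n s :: nat and \<epsilon> :: real
  assumes n: "n \<ge> 2" and supp: "set_pmf P \<subseteq> {1..n}" and s1: "1 \<le> s" and sn: "s \<le> n"
    and eps0: "0 < \<epsilon>" and eps1: "\<epsilon> \<le> 1" and dtv: "dTV n P (unif n) \<ge> \<epsilon>"
    and K: "2^64 \<le> real s * \<epsilon>^4" and R: "real n \<le> (real s)^2 * \<epsilon>^2"
begin

definition "q = 1 / real n"
definition "\<tau> = real s * \<epsilon>^2 / (1024 * real n)"
definition "\<gamma> = real s * \<epsilon>^2 / (36 * real n)"
definition "X = {1..n}"
definition "Lset = {x\<in>{1..n}. pmf P x < q}"

lemma fin: "finite (set_pmf P)" using supp finite_subset by blast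
lemma p01: "0 \<le> pmf P x" "pmf P x \<le> 1" by (auto simp: pmf_le_1)
lemma q0: "0 < q" using n by (simp add: q_def)
lemma q1: "q \<le> 1/2" using n by (simp add: q_def field_simps)
lemma sum1: "(\<Sum>x\<in>X. pmf P x) = 1" unfolding X_def by (rule sum_pmf_eq_1) (use supp in auto)
lemma finX: "finite X" by (simp add: X_def)
lemma gam_pos: "0 < \<gamma>" using n s1 eps0 by (simp add: \<gamma>_def)
lemma tau_lt: "3 * \<tau> < \<gamma> / 4"
proof -
  have "0 < real s * \<epsilon>^2 / real n" using n s1 eps0 by simp
  then show ?thesis unfolding \<tau>_def \<gamma>_def by (simp add: field_simps)
qed

lemma Dnn: "0 \<le> Dq s q (pmf P x)"
proof (cases "pmf P x \<le> q")
  case True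
  have "real s / 36 * (q - pmf P x)^2 \<le> Dq s q (pmf P x)"
    by (rule Dq_light[OF n s1 sn q_def p01(1) True])
  moreover have "0 \<le> real s / 36 * (q - pmf P x)^2" by simp
  ultimately show ?thesis by linarith
next
  case False
  then show ?thesis by (intro Dq_heavy[OF n s1 sn q_def]) (use p01 in auto)
qed

lemma Gl: "\<gamma> \<le> (\<Sum>x\<in>Lset. Dq s q (pmf P x))"
proof -
  have lm: "\<epsilon> \<le> (\<Sum>x\<in>Lset. q - pmf P x)"
    unfolding Lset_def q_def by (rule light_mass) (use n supp dtv in auto)
  have "\<epsilon>^2 / real n \<le> (\<Sum>x\<in>Lset. (q - pmf P x)^2)"
  proof (rule sum_sq_lower[OF _ _ lm])
    show "finite Lset" by (simp add: Lset_def)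
    have "card Lset \<le> card {1..n}" by (rule card_mono) (auto simp: Lset_def)
    then show "card Lset \<le> n" by simp
  qed (use eps0 in simp)
  then have "real s / 36 * (\<epsilon>^2 / real n) \<le> real s / 36 * (\<Sum>x\<in>Lset. (q - pmf P x)^2)"
    by (intro mult_left_mono) auto
  also have "\<dots> = (\<Sum>x\<in>Lset. real s / 36 * (q - pmf P x)^2)" by (simp add: sum_distrib_left)
  also have "\<dots> \<le> (\<Sum>x\<in>Lset. Dq s q (pmf P x))"
    by (intro sum_mono Dq_light[OF n s1 sn q_def p01(1)]) (auto simp: Lset_def)
  finally show ?thesis by (simp add: \<gamma>_def field_simps)
qed

lemma GA: assumes "Lset \<subseteq> A" "A \<subseteq> X" shows "\<gamma> \<le> (\<Sum>x\<in>A. Dq s q (pmf P x))"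
proof -
  have "(\<Sum>x\<in>Lset. Dq s q (pmf P x)) \<le> (\<Sum>x\<in>A. Dq s q (pmf P x))"
    using assms finX by (intro sum_mono2 Dnn) (auto intro: finite_subset)
  then show ?thesis using Gl by linarith
qed

lemma ident: "xs \<in> set_pmf (replicate_pmf s P) \<Longrightarrow>
    measure_pmf.prob P (set xs) - Fq s q = (\<Sum>x\<in>X. TT P s q x xs)"
  unfolding X_def by (rule TT_sum_identity) (use n supp q_def in auto)

lemma VX: "(\<Sum>x\<in>A. (pmf P x)^2 * (Fq s (pmf P x) * (1 - Fq s (pmf P x)))) \<le> (\<Sum>x\<in>A. pmf P x) / real s"
  by (simp add: sum_divide_distrib) (intro sum_mono var_le_p_over_s p01, use s1 in auto)

end



context Pctx begin

lemma cheb_A: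
  assumes "Lset \<subseteq> A" "A \<subseteq> X"
  shows "measure_pmf.prob (replicate_pmf s P) {xs. (\<Sum>x\<in>A. TT P s q x xs) \<le> (\<Sum>x\<in>A. Dq s q (pmf P x)) / 2}
     \<le> 4 * (\<Sum>x\<in>A. (pmf P x)^2 * (Fq s (pmf P x) * (1 - Fq s (pmf P x)))) / (\<Sum>x\<in>A. Dq s q (pmf P x))^2"
proof (rule part_cheb[OF fin])
  show "finite A" using assms finX by (auto intro: finite_subset)
  show "0 < (\<Sum>x\<in>A. Dq s q (pmf P x))" using GA[OF assms] gam_pos by linarith
qed

lemma P_bad_large:
  assumes large: "\<not> 2^22 * real s \<le> real n"
  shows "measure_pmf.prob (replicate_pmf s P) {xs. measure_pmf.prob P (set xs) \<le> Fq s q + 3 * \<tau>} \<le> 1/100"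
proof -
  let ?G = "\<Sum>x\<in>X. Dq s q (pmf P x)"
  let ?V = "\<Sum>x\<in>X. (pmf P x)^2 * (Fq s (pmf P x) * (1 - Fq s (pmf P x)))"
  have LX: "Lset \<subseteq> X" by (auto simp: Lset_def X_def)
  have G: "\<gamma> \<le> ?G" by (rule GA[OF LX]) simp
  have "measure_pmf.prob (replicate_pmf s P) {xs. measure_pmf.prob P (set xs) \<le> Fq s q + 3 * \<tau>}
      \<le> measure_pmf.prob (replicate_pmf s P) {xs. (\<Sum>x\<in>X. TT P s q x xs) \<le> ?G / 2}"
  proof (rule prob_mono_pmf)
    fix xs assume xs: "xs \<in> set_pmf (replicate_pmf s P)" "xs \<in> {xs. measure_pmf.prob P (set xs) \<le> Fq s q + 3 * \<tau>}"
    have "(\<Sum>x\<in>X. TT P s q x xs) \<le> 3 * \<tau>" using ident[OF xs(1)] xs(2) by simp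
    then show "xs \<in> {xs. (\<Sum>x\<in>X. TT P s q x xs) \<le> ?G / 2}" using tau_lt G gam_pos by simp
  qed
  also have "\<dots> \<le> 4 * ?V / ?G^2" by (rule cheb_A[OF LX]) simp
  also have "\<dots> \<le> 4 * (1 / real s) / \<gamma>^2"
  proof -
    have "?V \<le> 1 / real s" using VX[of X] sum1 by simp
    moreover have "\<gamma>^2 \<le> ?G^2" using G gam_pos by (intro power_mono) auto
    moreover have "0 \<le> ?V" by (intro sum_nonneg mult_nonneg_nonneg) (use Fq_nonneg Fq_le1 p01 in auto)
    ultimately show ?thesis using gam_pos
      by (intro frac_le mult_left_mono) auto
  qed
  also have "\<dots> \<le> 1/100"
  proof -
    have s0: "0 < real s" using s1 by simp
    have u: "2^64 \<le> real s * \<epsilon>^4" by (rule K)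
    have e: "4 * (1 / real s) / \<gamma>^2 = 5184 * (real n)^2 / ((real s)^2 * (real s * \<epsilon>^4))"
      using s0 eps0 n by (simp add: \<gamma>_def power2_eq_square power4_eq_xxxx field_simps)
    have nn: "(real n)^2 \<le> (2^22 * real s)^2" using large by (intro power_mono) auto
    have "5184 * (real n)^2 / ((real s)^2 * (real s * \<epsilon>^4)) \<le> 5184 * (2^22 * real s)^2 / ((real s)^2 * (real s * \<epsilon>^4))"
      using nn s0 eps0 by (intro divide_right_mono mult_left_mono) auto
    also have "\<dots> = 5184 * 2^44 / (real s * \<epsilon>^4)" using s0 by (simp add: power2_eq_square field_simps)
    also have "\<dots> \<le> 5184 * 2^44 / 2^64" using u by (intro divide_left_mono) auto
    also have "\<dots> \<le> 1/100" by simp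
    finally show ?thesis using e by simp
  qed
  finally show ?thesis .
qed

end



context Pctx begin

lemma P_bad_small:
  assumes small: "2^22 * real s \<le> real n"
  shows "measure_pmf.prob (replicate_pmf s P) {xs. measure_pmf.prob P (set xs) \<le> Fq s q + 3 * \<tau>} \<le> 2/100"
proof -
  define \<beta> :: real where "\<beta> = 1 / 2^16"
  define b where "b = \<beta> / real s"
  define A where "A = {x\<in>X. pmf P x < b}"
  define B where "B = {x\<in>X. b \<le> pmf P x}"
  let ?p = "pmf P"
  have s0: "0 < real s" using s1 by simp
  have sq: "real s * q \<le> 1 / 2^22"
    using small s0 n by (simp add: q_def field_simps)
  have AX: "A \<subseteq> X" and BX: "B \<subseteq> X" by (auto simp: A_def B_def)
  have finA: "finite A" and finB: "finite B" using AX BX finX by (auto intro: finite_subset)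
  have ABX: "X = A \<union> B" "A \<inter> B = {}" by (auto simp: A_def B_def)
  have sumsplit: "(\<Sum>x\<in>X. f x) = (\<Sum>x\<in>A. f x) + (\<Sum>x\<in>B. f x)" for f :: "nat \<Rightarrow> real"
    using ABX finA finB by (simp add: sum.union_disjoint)
  have qb: "q \<le> b"
  proof -
    have "real s * q \<le> real s * b" using sq s0 by (simp add: b_def \<beta>_def)
    then show ?thesis using s0 by simp
  qed
  have LA: "Lset \<subseteq> A" using qb by (auto simp: Lset_def A_def X_def)
  let ?GA = "\<Sum>x\<in>A. Dq s q (?p x)"
  let ?VA = "\<Sum>x\<in>A. (?p x)^2 * (Fq s (?p x) * (1 - Fq s (?p x)))"
  have GA_ge: "\<gamma> \<le> ?GA" by (rule GA[OF LA AX])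
  have GA_pos: "0 < ?GA" using GA_ge gam_pos by linarith
  have VA_pt: "(?p x)^2 * (Fq s (?p x) * (1 - Fq s (?p x))) \<le> 64 * real s * q^2 * ?p x + (4 * \<beta> / real s) * Dq s q (?p x)"
    if x: "x \<in> A" for x
  proof -
    let ?y = "?p x"
    have y0: "0 \<le> ?y" and y1: "?y \<le> 1" using p01 by auto
    have yb: "?y < b" using x by (simp add: A_def)
    have v: "?y^2 * (Fq s ?y * (1 - Fq s ?y)) \<le> real s * ?y^3" by (rule var_le_sp3[OF y0 y1])
    have D0: "0 \<le> Dq s q ?y" by (rule Dnn)
    show ?thesis
    proof (cases "?y \<le> 8 * q")
      case True
      have "?y^2 \<le> (8 * q)^2" using True y0 by (intro power_mono) auto
      then have "real s * ?y^3 \<le> real s * ((8 * q)^2 * ?y)"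
        using y0 s0 by (simp add: power3_eq_cube power2_eq_square mult_right_mono mult_left_mono)
      then have "real s * ?y^3 \<le> 64 * real s * q^2 * ?y" by (simp add: power2_eq_square algebra_simps)
      moreover have "0 \<le> (4 * \<beta> / real s) * Dq s q ?y" using D0 by (simp add: \<beta>_def)
      ultimately show ?thesis using v by linarith
    next
      case False
      have sy: "real s * ?y \<le> \<beta>" using yb s0 by (simp add: b_def field_simps)
      have "real s * ?y^3 = (real s * ?y) * ?y^2" by (simp add: power2_eq_square power3_eq_cube)
      also have "\<dots> \<le> \<beta> * ?y^2" using sy by (intro mult_right_mono) auto
      finally have a: "real s * ?y^3 \<le> \<beta> * ?y^2" .
      have F: "Fq s ?y \<ge> real s * ?y / 2"
      proof -
        have "Fq s ?y \<ge> real s * ?y / (1 + real s * ?y)" by (rule Fq_ge[OF y0 y1])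
        moreover have "real s * ?y / (1 + real s * ?y) \<ge> real s * ?y / 2"
        proof -
          have sy0: "0 \<le> real s * ?y" using y0 by simp
          have le2: "1 + real s * ?y \<le> 2" using sy by (simp add: \<beta>_def)
          have "0 < 1 + real s * ?y" using sy0 by linarith
          then have pos: "0 < 2 * (1 + real s * ?y)" by simp
          show ?thesis by (rule divide_left_mono[OF le2 sy0 pos])
        qed
        ultimately show ?thesis by linarith
      qed
      have "2 * real s * q \<le> real s * ?y / 4" using False s0 by (simp add: field_simps)
      then have "real s * ?y / 4 \<le> Fq s ?y - 2 * real s * q" using F by linarith
      then have "?y * (real s * ?y / 4) \<le> ?y * (Fq s ?y - 2 * real s * q)" using y0 by (intro mult_left_mono) auto
      moreover have "?y * (Fq s ?y - 2 * real s * q) \<le> Dq s q ?y"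
        using Dq_ge_simple[OF y0 y1, of q s] q0 q1 by simp
      ultimately have "Dq s q ?y \<ge> ?y * (real s * ?y / 4)" by linarith
      then have "?y^2 \<le> 4 / real s * Dq s q ?y" using s0 by (simp add: power2_eq_square field_simps)
      then have "\<beta> * ?y^2 \<le> \<beta> * (4 / real s * Dq s q ?y)" by (intro mult_left_mono) (auto simp: \<beta>_def)
      moreover have "0 \<le> 64 * real s * q^2 * ?y" using y0 by simp
      moreover have "\<beta> * (4 / real s * Dq s q ?y) = (4 * \<beta> / real s) * Dq s q ?y" by simp
      ultimately show ?thesis using v a by linarith
    qed
  qed
  have VA: "?VA \<le> 64 * real s * q^2 + (4 * \<beta> / real s) * ?GA"
  proof -
    have "?VA \<le> (\<Sum>x\<in>A. 64 * real s * q^2 * ?p x + (4 * \<beta> / real s) * Dq s q (?p x))"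
      by (intro sum_mono VA_pt)
    also have "\<dots> = 64 * real s * q^2 * (\<Sum>x\<in>A. ?p x) + (4 * \<beta> / real s) * ?GA"
      by (simp add: sum.distrib sum_distrib_left)
    also have "(\<Sum>x\<in>A. ?p x) \<le> 1"
    proof -
      have "0 \<le> (\<Sum>x\<in>B. ?p x)" by (intro sum_nonneg p01)
      then show ?thesis using sum1 sumsplit[of ?p] by linarith
    qed
    then have "64 * real s * q^2 * (\<Sum>x\<in>A. ?p x) \<le> 64 * real s * q^2"
      by (intro mult_left_le) (auto intro: sum_nonneg p01)
    finally show ?thesis by linarith
  qed
  have PrA: "measure_pmf.prob (replicate_pmf s P) {xs. (\<Sum>x\<in>A. TT P s q x xs) \<le> ?GA / 2} \<le> 1/100"
  proof -
    have "measure_pmf.prob (replicate_pmf s P) {xs. (\<Sum>x\<in>A. TT P s q x xs) \<le> ?GA / 2} \<le> 4 * ?VA / ?GA^2"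
      by (rule cheb_A[OF LA AX])
    also have "\<dots> \<le> 4 * (64 * real s * q^2 + (4 * \<beta> / real s) * ?GA) / ?GA^2"
      using VA by (intro divide_right_mono) auto
    also have "\<dots> = 4 * (64 * real s * q^2) / ?GA^2 + 4 * (4 * \<beta> / real s) / ?GA"
      using GA_pos by (simp add: power2_eq_square add_divide_distrib)
    also have "\<dots> \<le> 4 * (64 * real s * q^2) / \<gamma>^2 + 4 * (4 * \<beta> / real s) / \<gamma>"
      using GA_ge gam_pos s0 by (intro add_mono divide_left_mono power_mono mult_pos_pos) (auto simp: \<beta>_def q_def)
    also have "4 * (64 * real s * q^2) / \<gamma>^2 = 331776 / (real s * \<epsilon>^4)"
      using s0 eps0 n by (simp add: \<gamma>_def q_def power2_eq_square power4_eq_xxxx field_simps)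
    also have "4 * (4 * \<beta> / real s) / \<gamma> = 576 * \<beta> * (real n / ((real s)^2 * \<epsilon>^2))"
      using s0 eps0 n by (simp add: \<gamma>_def power2_eq_square field_simps)
    also have "331776 / (real s * \<epsilon>^4) \<le> 331776 / 2^64"
      using K by (intro divide_left_mono) auto
    also have "576 * \<beta> * (real n / ((real s)^2 * \<epsilon>^2)) \<le> 576 * \<beta> * 1"
      using R s0 eps0 by (intro mult_left_mono) (auto simp: \<beta>_def divide_le_eq_1)
    finally show ?thesis by (simp add: \<beta>_def)
  qed
  let ?PB = "\<Sum>x\<in>B. ?p x"
  have bad_split: "(\<Sum>x\<in>A. TT P s q x xs) + (\<Sum>x\<in>B. TT P s q x xs) \<le> 3 * \<tau>"
    if "xs \<in> set_pmf (replicate_pmf s P)" "measure_pmf.prob P (set xs) \<le> Fq s q + 3 * \<tau>" for xs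
    using ident[OF that(1)] that(2) sumsplit[of "\<lambda>x. TT P s q x xs"] by simp
  show ?thesis
  proof (cases "?PB \<le> \<epsilon>^2 / 288")
    case True
    have TB: "(\<Sum>x\<in>B. TT P s q x xs) \<ge> - (\<gamma> / 4)" for xs
    proof -
      have "(\<Sum>x\<in>B. TT P s q x xs) \<ge> (\<Sum>x\<in>B. - (2 * real s * q * ?p x))"
        unfolding TT_def by (intro sum_mono term_lower p01) (use q0 q1 in auto)
      also have "(\<Sum>x\<in>B. - (2 * real s * q * ?p x)) = - (2 * real s * q * ?PB)"
        by (simp add: sum_negf sum_distrib_left)
      also have "- (2 * real s * q * ?PB) \<ge> - (2 * real s * q * (\<epsilon>^2 / 288))"
        using True s0 q0 by (simp add: mult_left_mono)
      also have "- (2 * real s * q * (\<epsilon>^2 / 288)) = - (\<gamma> / 4)"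
        by (simp add: \<gamma>_def q_def field_simps)
      finally show ?thesis by linarith
    qed
    have "measure_pmf.prob (replicate_pmf s P) {xs. measure_pmf.prob P (set xs) \<le> Fq s q + 3 * \<tau>}
        \<le> measure_pmf.prob (replicate_pmf s P) {xs. (\<Sum>x\<in>A. TT P s q x xs) \<le> ?GA / 2}"
    proof (rule prob_mono_pmf)
      fix xs assume xs: "xs \<in> set_pmf (replicate_pmf s P)" "xs \<in> {xs. measure_pmf.prob P (set xs) \<le> Fq s q + 3 * \<tau>}"
      have "(\<Sum>x\<in>A. TT P s q x xs) \<le> 3 * \<tau> + \<gamma> / 4" using bad_split[OF xs(1)] xs(2) TB[of xs] by simp
      then show "xs \<in> {xs. (\<Sum>x\<in>A. TT P s q x xs) \<le> ?GA / 2}" using tau_lt GA_ge by simp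
    qed
    also have "\<dots> \<le> 1/100" by (rule PrA)
    finally show ?thesis by simp
  next
    case False
    let ?GB = "\<Sum>x\<in>B. Dq s q (?p x)"
    let ?VB = "\<Sum>x\<in>B. (?p x)^2 * (Fq s (?p x) * (1 - Fq s (?p x)))"
    have PBpos: "\<epsilon>^2 / 288 < ?PB" using False by simp
    have PB0: "0 < ?PB" using PBpos eps0 by (smt (verit) divide_pos_pos zero_less_power)
    have GB_ge: "\<beta> * ?PB / 4 \<le> ?GB"
    proof -
      have "\<beta> / 4 * ?p x \<le> Dq s q (?p x)" if x: "x \<in> B" for x
      proof -
        let ?y = "?p x"
        have y0: "0 \<le> ?y" and y1: "?y \<le> 1" using p01 by auto
        have sy: "\<beta> \<le> real s * ?y" using x s0 by (simp add: B_def b_def field_simps)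
        have F: "\<beta> / 2 \<le> Fq s ?y"
        proof -
          have "real s * ?y / (1 + real s * ?y) \<le> Fq s ?y" by (rule Fq_ge[OF y0 y1])
          moreover have "\<beta> / 2 \<le> real s * ?y / (1 + real s * ?y)"
          proof -
            have "\<beta> * (1 + real s * ?y) \<le> 2 * (real s * ?y)"
              using sy by (simp add: \<beta>_def algebra_simps)
            moreover have pos: "0 < 1 + real s * ?y" using y0 s0 by (simp add: add_pos_nonneg)
            ultimately show ?thesis by (simp add: pos_le_divide_eq[OF pos])
          qed
          ultimately show ?thesis by linarith
        qed
        have "2 * real s * q \<le> \<beta> / 4" using sq by (simp add: \<beta>_def)
        then have "\<beta> / 4 \<le> Fq s ?y - 2 * real s * q" using F by linarith
        then have "?y * (\<beta> / 4) \<le> ?y * (Fq s ?y - 2 * real s * q)" using y0 by (intro mult_left_mono) auto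
        also have "\<dots> \<le> Dq s q ?y" by (rule Dq_ge_simple[OF y0 y1]) (use q0 q1 in auto)
        finally show ?thesis by (simp add: algebra_simps)
      qed
      then have "(\<Sum>x\<in>B. \<beta> / 4 * ?p x) \<le> ?GB" by (intro sum_mono)
      moreover have "(\<Sum>x\<in>B. \<beta> / 4 * ?p x) = \<beta> / 4 * ?PB" by (rule sum_distrib_left[symmetric])
      ultimately show ?thesis by simp
    qed
    have GB_pos: "0 < ?GB"
    proof -
      have "0 < \<epsilon>^2 / 288" using eps0 by simp
      then have "0 < ?PB" using PBpos by linarith
      then have "0 < \<beta> * ?PB / 4" by (simp add: \<beta>_def)
      then show ?thesis using GB_ge by linarith
    qed
    have VB: "?VB \<le> ?PB / real s" by (rule VX)
    have PrB: "measure_pmf.prob (replicate_pmf s P) {xs. (\<Sum>x\<in>B. TT P s q x xs) \<le> ?GB / 2} \<le> 1/100"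
    proof -
      have "measure_pmf.prob (replicate_pmf s P) {xs. (\<Sum>x\<in>B. TT P s q x xs) \<le> ?GB / 2} \<le> 4 * ?VB / ?GB^2"
        by (rule part_cheb[OF fin finB GB_pos])
      also have "\<dots> \<le> 4 * (?PB / real s) / (\<beta> * ?PB / 4)^2"
        using VB GB_ge PBpos PB0 eps0 s0 by (intro frac_le mult_left_mono power_mono) (auto simp: \<beta>_def intro!: sum_nonneg mult_nonneg_nonneg Fq_nonneg p01 Fq_le1)
      also have "\<dots> = 64 / (real s * \<beta>^2 * ?PB)"
        using PBpos PB0 eps0 s0 by (simp add: power2_eq_square field_simps)
      also have "\<dots> \<le> 64 / (real s * \<beta>^2 * (\<epsilon>^2 / 288))"
        using PBpos PB0 eps0 s0 by (intro divide_left_mono mult_left_mono mult_pos_pos) (auto simp: \<beta>_def)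
      also have "\<dots> = 64 * 288 * 2^32 / (real s * \<epsilon>^2)"
        using eps0 s0 by (simp add: \<beta>_def field_simps)
      also have "\<dots> \<le> 64 * 288 * 2^32 / 2^64"
      proof -
        have "\<epsilon>^4 \<le> \<epsilon>^2" using eps0 eps1 by (intro power_decreasing) auto
        then have "real s * \<epsilon>^4 \<le> real s * \<epsilon>^2" using s0 by (intro mult_left_mono) auto
        then have "2^64 \<le> real s * \<epsilon>^2" using K by linarith
        then show ?thesis by (intro divide_left_mono) auto
      qed
      also have "\<dots> \<le> 1/100" by simp
      finally show ?thesis .
    qed
    have "measure_pmf.prob (replicate_pmf s P) {xs. measure_pmf.prob P (set xs) \<le> Fq s q + 3 * \<tau>}
        \<le> measure_pmf.prob (replicate_pmf s P) ({xs. (\<Sum>x\<in>A. TT P s q x xs) \<le> ?GA / 2} \<union> {xs. (\<Sum>x\<in>B. TT P s q x xs) \<le> ?GB / 2})"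
    proof (rule prob_mono_pmf)
      fix xs assume xs: "xs \<in> set_pmf (replicate_pmf s P)" "xs \<in> {xs. measure_pmf.prob P (set xs) \<le> Fq s q + 3 * \<tau>}"
      have "(\<Sum>x\<in>A. TT P s q x xs) + (\<Sum>x\<in>B. TT P s q x xs) \<le> 3 * \<tau>" using bad_split[OF xs(1)] xs(2) by simp
      then show "xs \<in> {xs. (\<Sum>x\<in>A. TT P s q x xs) \<le> ?GA / 2} \<union> {xs. (\<Sum>x\<in>B. TT P s q x xs) \<le> ?GB / 2}"
        using tau_lt GA_ge GB_pos gam_pos by auto
    qed
    also have "\<dots> \<le> measure_pmf.prob (replicate_pmf s P) {xs. (\<Sum>x\<in>A. TT P s q x xs) \<le> ?GA / 2}
        + measure_pmf.prob (replicate_pmf s P) {xs. (\<Sum>x\<in>B. TT P s q x xs) \<le> ?GB / 2}"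
      by (rule measure_Un_le) (auto simp: measure_pmf.emeasure_eq_measure)
    also have "\<dots> \<le> 1/100 + 1/100" using PrA PrB by linarith
    finally show ?thesis by simp
  qed
qed

end



lemma prob_bind_lower:
  assumes "\<And>x. x \<in> set_pmf M \<Longrightarrow> x \<in> G \<Longrightarrow> a \<le> measure_pmf.prob (f x) A" and a: "0 \<le> a"
  shows "a * measure_pmf.prob M G \<le> measure_pmf.prob (bind_pmf M f) A"
proof -
  have "a * measure_pmf.prob M G = (\<integral>x. a * indicator G x \<partial>M)" by simp
  also have "\<dots> \<le> (\<integral>x. measure_pmf.prob (f x) A \<partial>M)"
  proof (rule integral_mono_AE)
    show "integrable (measure_pmf M) (\<lambda>x. a * indicator G x)"
      by (intro integrable_mult_right measure_pmf.integrable_const_bound[where B=1]) auto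
    show "integrable (measure_pmf M) (\<lambda>x. measure_pmf.prob (f x) A)"
      by (intro measure_pmf.integrable_const_bound[where B=1]) auto
    show "AE x in measure_pmf M. a * indicator G x \<le> measure_pmf.prob (f x) A"
      using assms by (auto simp: AE_measure_pmf_iff indicator_def)
  qed
  also have "\<dots> = measure_pmf.prob (bind_pmf M f) A" by (simp add: prob_bind_pmf)
  finally show ?thesis .
qed

lemma prob_bind_return:
  "measure_pmf.prob (bind_pmf M (\<lambda>x. return_pmf (g x))) {y} = measure_pmf.prob M {x. g x = y}"
proof -
  have "bind_pmf M (\<lambda>x. return_pmf (g x)) = map_pmf g M" by (simp add: map_pmf_def)
  then show ?thesis by (simp add: vimage_def)
qed

lemma inner_bound:
  fixes D :: "nat \<Rightarrow> nat pmf" and S :: "nat set" and chi :: "nat set" and k m :: nat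
  assumes fin: "\<And>j. j \<in> {1..k} \<Longrightarrow> finite (set_pmf (D j))" and chi: "chi \<subseteq> {1..k}"
    and hchi: "\<And>j. j \<in> chi \<Longrightarrow> pl \<le> measure_pmf.prob (D j) S" and pl: "0 < pl"
    and hn: "\<And>j. j \<in> {1..k} - chi \<Longrightarrow> measure_pmf.prob (D j) S \<le> pu" and t: "0 < t" "t \<le> pu"
    and thr1: "thr = pu + t" and thr2: "thr \<le> pl - t" and m: "0 < m"
    and b1: "exp (- real m * t^2 / (4 * pu)) \<le> \<delta>" and b2: "exp (- real m * t^2 / (4 * pl)) \<le> \<delta>"
  shows "1 - real k * \<delta> \<le> measure_pmf.prob (Pi_pmf {1..k} [] (\<lambda>j. replicate_pmf m (D j)))
           {Xs. {j\<in>{1..k}. thr \<le> real (cnt S (Xs j)) / real m} = chi}"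
proof -
  let ?M = "Pi_pmf {1..k} [] (\<lambda>j. replicate_pmf m (D j))"
  define bad where "bad j ys = (if j \<in> chi then real (cnt S ys) / real m < thr else thr \<le> real (cnt S ys) / real m)" for j ys
  have m0: "0 < real m" using m by simp
  have badj: "measure_pmf.prob (replicate_pmf m (D j)) {ys. bad j ys} \<le> \<delta>" if j: "j \<in> {1..k}" for j
  proof (cases "j \<in> chi")
    case True
    have "measure_pmf.prob (replicate_pmf m (D j)) {ys. bad j ys}
        \<le> measure_pmf.prob (replicate_pmf m (D j)) {ys. real (cnt S ys) \<le> real m * (pl - t)}"
    proof (intro measure_pmf.finite_measure_mono)
      show "{ys. bad j ys} \<subseteq> {ys. real (cnt S ys) \<le> real m * (pl - t)}"
      proof
        fix ys assume "ys \<in> {ys. bad j ys}"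
        then have "real (cnt S ys) / real m < thr" using True by (simp add: bad_def)
        then have "real (cnt S ys) < real m * thr" using m0 by (simp add: field_simps)
        also have "\<dots> \<le> real m * (pl - t)" using thr2 m0 by simp
        finally show "ys \<in> {ys. real (cnt S ys) \<le> real m * (pl - t)}" by simp
      qed
    qed auto
    also have "\<dots> \<le> exp (- real m * t^2 / (4 * pl))"
      by (rule chernoff_lower[OF fin[OF j] hchi[OF True] pl]) (use t in simp)
    finally show ?thesis using b2 by simp
  next
    case False
    have "measure_pmf.prob (replicate_pmf m (D j)) {ys. bad j ys}
        \<le> measure_pmf.prob (replicate_pmf m (D j)) {ys. real m * (pu + t) \<le> real (cnt S ys)}"
    proof (intro measure_pmf.finite_measure_mono)
      show "{ys. bad j ys} \<subseteq> {ys. real m * (pu + t) \<le> real (cnt S ys)}"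
      proof
        fix ys assume "ys \<in> {ys. bad j ys}"
        then have "thr \<le> real (cnt S ys) / real m" using False by (simp add: bad_def)
        then show "ys \<in> {ys. real m * (pu + t) \<le> real (cnt S ys)}" using m0 thr1 by (simp add: field_simps)
      qed
    qed auto
    also have "\<dots> \<le> exp (- real m * t^2 / (4 * pu))"
      by (rule chernoff_upper[OF fin[OF j] hn t]) (use j False in auto)
    finally show ?thesis using b1 by simp
  qed
  have compl: "- {Xs. {j\<in>{1..k}. thr \<le> real (cnt S (Xs j)) / real m} = chi} \<subseteq> (\<Union>j\<in>{1..k}. {Xs. bad j (Xs j)})"
  proof
    fix Xs assume "Xs \<in> - {Xs. {j\<in>{1..k}. thr \<le> real (cnt S (Xs j)) / real m} = chi}"
    then have ne: "{j\<in>{1..k}. thr \<le> real (cnt S (Xs j)) / real m} \<noteq> chi" by simp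
    show "Xs \<in> (\<Union>j\<in>{1..k}. {Xs. bad j (Xs j)})"
    proof (rule ccontr)
      assume "Xs \<notin> (\<Union>j\<in>{1..k}. {Xs. bad j (Xs j)})"
      then have "\<forall>j\<in>{1..k}. \<not> bad j (Xs j)" by auto
      then have "{j\<in>{1..k}. thr \<le> real (cnt S (Xs j)) / real m} = chi"
        using chi by (auto simp: bad_def not_less split: if_splits)
      with ne show False by simp
    qed
  qed
  have "measure_pmf.prob ?M (- {Xs. {j\<in>{1..k}. thr \<le> real (cnt S (Xs j)) / real m} = chi})
      \<le> measure_pmf.prob ?M (\<Union>j\<in>{1..k}. {Xs. bad j (Xs j)})"
    using compl by (intro measure_pmf.finite_measure_mono) auto
  also have "\<dots> \<le> (\<Sum>j\<in>{1..k}. measure_pmf.prob ?M {Xs. bad j (Xs j)})"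
    by (rule measure_pmf.finite_measure_subadditive_finite) auto
  also have "\<dots> = (\<Sum>j\<in>{1..k}. measure_pmf.prob (replicate_pmf m (D j)) {ys. bad j ys})"
  proof (intro sum.cong refl)
    fix j assume j: "j \<in> {1..k}"
    have "measure_pmf.prob ?M {Xs. bad j (Xs j)} = measure_pmf.prob (map_pmf (\<lambda>f. f j) ?M) {ys. bad j ys}"
      by (simp add: vimage_def)
    also have "map_pmf (\<lambda>f. f j) ?M = replicate_pmf m (D j)" using j by (simp add: Pi_pmf_component)
    finally show "measure_pmf.prob ?M {Xs. bad j (Xs j)} = measure_pmf.prob (replicate_pmf m (D j)) {ys. bad j ys}" .
  qed
  also have "\<dots> \<le> (\<Sum>j\<in>{1..k}. \<delta>)" by (intro sum_mono badj)
  also have "\<dots> = real k * \<delta>" by simp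
  finally have "measure_pmf.prob ?M (- {Xs. {j\<in>{1..k}. thr \<le> real (cnt S (Xs j)) / real m} = chi}) \<le> real k * \<delta>" .
  moreover have "measure_pmf.prob ?M (- {Xs. {j\<in>{1..k}. thr \<le> real (cnt S (Xs j)) / real m} = chi})
      = 1 - measure_pmf.prob ?M {Xs. {j\<in>{1..k}. thr \<le> real (cnt S (Xs j)) / real m} = chi}"
    by (simp add: measure_pmf.prob_compl[symmetric] Compl_eq_Diff_UNIV)
  ultimately show ?thesis by simp
qed



lemma ln2_half: "1/2 \<le> ln (2::real)"
proof -
  have "exp (1/2::real) \<le> 1 + 1/2 + (1/2)^2" by (rule exp_bound) auto
  also have "\<dots> \<le> 2" by (simp add: power2_eq_square)
  finally have "exp (1/2::real) \<le> 2" .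
  then show ?thesis by (metis exp_gt_zero exp_le_cancel_iff exp_ln order_trans zero_less_numeral)
qed

lemma lnk_facts:
  assumes "(k::nat) \<ge> 2"
  shows "1/2 \<le> ln (real k)" "1 \<le> real k * ln (real k)" "real k \<le> 2 * (real k * ln (real k))"
proof -
  have "ln 2 \<le> ln (real k)" using assms by simp
  then show a: "1/2 \<le> ln (real k)" using ln2_half by linarith
  have "real k * (1/2) \<le> real k * ln (real k)" using a by (intro mult_left_mono) auto
  moreover have "1 \<le> real k * (1/2)" using assms by simp
  ultimately show "1 \<le> real k * ln (real k)" by linarith
  show "real k \<le> 2 * (real k * ln (real k))" using \<open>real k * (1/2) \<le> real k * ln (real k)\<close> by simp
qed

lemma neps4:
  fixes n :: nat and \<epsilon> c0 :: real
  assumes n: "n \<ge> 1" and c0: "0 < c0" and e: "\<epsilon> \<ge> c0 * real n powr (-1/4)"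
  shows "c0^4 \<le> real n * \<epsilon>^4"
proof -
  have np: "0 < real n" using n by simp
  have "(real n powr (-1/4))^4 = real n powr (of_nat 4 * (-1/4))"
    using np by (subst powr_power) auto
  also have "\<dots> = inverse (real n)" using np by (simp add: powr_minus)
  finally have i: "(real n powr (-1/4))^4 = inverse (real n)" .
  have "0 \<le> c0 * real n powr (-1/4)" using c0 by simp
  then have "(c0 * real n powr (-1/4))^4 \<le> \<epsilon>^4" using e by (intro power_mono) auto
  then have "c0^4 * (real n powr (-1/4))^4 \<le> \<epsilon>^4" by (simp only: power_mult_distrib)
  then have "c0^4 * inverse (real n) \<le> \<epsilon>^4" unfolding i .
  then show ?thesis using np by (simp add: field_simps)
qed

lemma s1_facts:
  fixes n k :: nat and \<epsilon> :: real
  assumes k: "k \<ge> 2" and n: "n \<ge> 1" and e: "0 < \<epsilon>" "\<epsilon> \<le> 1"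
  defines "A \<equiv> sqrt (real n * real k * ln (real k)) / \<epsilon>^2"
  shows "real (esw_s1 n k \<epsilon>) \<ge> min (real n) A"
    and "real (esw_s1 n k \<epsilon>) \<le> min (real n) A + 1"
    and "esw_s1 n k \<epsilon> \<le> n"
    and "1 \<le> esw_s1 n k \<epsilon>"
    and "1 \<le> A"
proof -
  have kl: "1 \<le> real k * ln (real k)" by (rule lnk_facts(2)[OF k])
  have "1 \<le> real n * (real k * ln (real k))" using n kl by (metis mult_mono' of_nat_1 of_nat_mono mult_1 zero_le_one order.trans)
  then have "1 \<le> sqrt (real n * real k * ln (real k))" by (simp add: mult.assoc)
  moreover have "\<epsilon>^2 \<le> 1" using e by (simp add: power_le_one)
  ultimately have "\<epsilon>^2 \<le> sqrt (real n * real k * ln (real k))" by linarith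
  moreover have "0 < \<epsilon>^2" using e by simp
  ultimately show A1: "1 \<le> A" unfolding A_def by (simp add: le_divide_eq)
  have m0: "0 \<le> min (real n) A" using A1 n by simp
  have eq: "real (esw_s1 n k \<epsilon>) = real_of_int \<lceil>min (real n) A\<rceil>"
    unfolding esw_s1_def A_def using m0 A_def by simp
  show "real (esw_s1 n k \<epsilon>) \<ge> min (real n) A" unfolding eq by linarith
  show "real (esw_s1 n k \<epsilon>) \<le> min (real n) A + 1" unfolding eq by linarith
  have "\<lceil>min (real n) A\<rceil> \<le> int n" by (simp add: ceiling_le_iff)
  then show "esw_s1 n k \<epsilon> \<le> n" unfolding esw_s1_def A_def[symmetric] by simp
  have "1 \<le> min (real n) A" using A1 n by simp
  then have "1 \<le> \<lceil>min (real n) A\<rceil>" by (simp add: le_ceiling_iff)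
  then show "1 \<le> esw_s1 n k \<epsilon>" unfolding esw_s1_def A_def[symmetric] by linarith
qed



lemma sqrt_2_128: "sqrt (2^128 :: real) = 2^64"
proof -
  have "(2^128::real) = (2^64)^2" by simp
  then show ?thesis by simp
qed

lemma chern_exp:
  fixes m k s n :: nat and \<tau> \<epsilon> p :: real
  assumes k: "k \<ge> 2" and s0: "0 < s" and n0: "0 < n" and e: "0 < \<epsilon>"
    and m: "2^26 * real n * ln (real k) / (real s * \<epsilon>^4) \<le> real m"
    and tau: "\<tau> = real s * \<epsilon>^2 / (1024 * real n)"
    and p: "0 < p" "p \<le> 2 * real s / real n"
  shows "exp (- real m * \<tau>^2 / (4 * p)) \<le> 1 / real k ^ 8"
proof -
  have lk: "0 < ln (real k)" using k by simp
  let ?X = "2^26 * real n * ln (real k) / (real s * \<epsilon>^4)"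
  have eq: "?X * \<tau>^2 / (4 * (2 * real s / real n)) = 8 * ln (real k)"
    using s0 n0 e unfolding tau by (simp add: power2_eq_square power4_eq_xxxx field_simps)
  have "?X * \<tau>^2 / (4 * (2 * real s / real n)) \<le> real m * \<tau>^2 / (4 * (2 * real s / real n))"
    using m s0 n0 by (intro divide_right_mono mult_right_mono) auto
  also have "\<dots> \<le> real m * \<tau>^2 / (4 * p)"
    using p s0 n0 by (intro divide_left_mono) auto
  finally have "8 * ln (real k) \<le> real m * \<tau>^2 / (4 * p)" using eq by simp
  then have "exp (- real m * \<tau>^2 / (4 * p)) \<le> exp (- (8 * ln (real k)))" by simp
  also have "exp (- (8 * ln (real k))) = 1 / real k ^ 8"
  proof -
    have "exp (real 8 * ln (real k)) = exp (ln (real k)) ^ 8" by (rule exp_of_nat_mult)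
    then have "exp (8 * ln (real k)) = real k ^ 8" using k by simp
    then show ?thesis by (simp add: exp_minus field_simps)
  qed
  finally show ?thesis .
qed

lemma main_prob:
  fixes k n :: nat and \<epsilon> :: real and P :: "nat pmf" and D :: "nat \<Rightarrow> nat pmf" and chi :: "nat set"
  assumes k: "k \<ge> 2" and n1: "n \<ge> 1" and e0: "0 < \<epsilon>" and e1: "\<epsilon> \<le> 1"
    and ec: "\<epsilon> \<ge> 2^32 * real n powr (-1/4)"
    and supp: "set_pmf P \<subseteq> {1..n}" and dtv: "dTV n P (unif n) \<ge> \<epsilon>"
    and chi: "chi \<subseteq> {1..k}" and Dchi: "\<forall>i\<in>chi. D i = P" and Dn: "\<forall>i\<in>{1..k} - chi. D i = unif n"
  shows "8/9 \<le> measure_pmf.prob (esw_tester (2^26) (1/1024) n k \<epsilon> P D) {chi}"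
proof -
  have ne4: "2^128 \<le> real n * \<epsilon>^4" using neps4[OF n1 _ ec] by simp
  have e41: "\<epsilon>^4 \<le> 1" using e0 e1 by (simp add: power_le_one)
  have n2: "n \<ge> 2"
  proof -
    have "real n * \<epsilon>^4 \<le> real n * 1" using e41 by (intro mult_left_mono) auto
    then show ?thesis using ne4 by simp
  qed
  define A where "A = sqrt (real n * real k * ln (real k)) / \<epsilon>^2"
  define s where "s = esw_s1 n k \<epsilon>"
  have s_ge: "min (real n) A \<le> real s" and s_n: "s \<le> n" and s1: "1 \<le> s" and A1: "1 \<le> A"
    using s1_facts[OF k n1 e0 e1] by (simp_all add: A_def s_def)
  have kl: "1 \<le> real k * ln (real k)" by (rule lnk_facts(2)[OF k])
  have K: "2^64 \<le> real s * \<epsilon>^4"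
  proof (cases "real n \<le> A")
    case True
    then have "real n \<le> real s" using s_ge by simp
    then have "real n * \<epsilon>^4 \<le> real s * \<epsilon>^4" by (intro mult_right_mono) auto
    then show ?thesis using ne4 by simp
  next
    case False
    then have As: "A \<le> real s" using s_ge by simp
    have "sqrt (real n) * 1 \<le> sqrt (real n) * sqrt (real k * ln (real k))"
      using kl by (intro mult_left_mono) auto
    then have "sqrt (real n) \<le> sqrt (real n * real k * ln (real k))" by (simp add: real_sqrt_mult mult.assoc)
    then have "sqrt (real n) * \<epsilon>^2 \<le> A * \<epsilon>^4" using e0 by (simp add: A_def power2_eq_square power4_eq_xxxx)
    moreover have "sqrt (real n) * \<epsilon>^2 = sqrt (real n * \<epsilon>^4)"
    proof -
      have "\<epsilon>^4 = (\<epsilon>^2)^2" by simp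
      then have "sqrt (\<epsilon>^4) = \<bar>\<epsilon>^2\<bar>" by (metis real_sqrt_abs)
      then have "sqrt (\<epsilon>^4) = \<epsilon>^2" by simp
      then show ?thesis by (simp add: real_sqrt_mult)
    qed
    moreover have "sqrt (2^128) \<le> sqrt (real n * \<epsilon>^4)" by (rule real_sqrt_le_mono[OF ne4])
    moreover have "A * \<epsilon>^4 \<le> real s * \<epsilon>^4" using As by (intro mult_right_mono) auto
    ultimately show ?thesis unfolding sqrt_2_128 by linarith
  qed
  have R: "real n \<le> (real s)^2 * \<epsilon>^2"
  proof (cases "real n \<le> A")
    case True
    then have ns: "real n \<le> real s" using s_ge by simp
    have "1 \<le> real n * \<epsilon>^2"
    proof -
      have "\<epsilon>^4 \<le> \<epsilon>^2" using e0 e1 by (intro power_decreasing) auto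
      then have "real n * \<epsilon>^4 \<le> real n * \<epsilon>^2" by (intro mult_left_mono) auto
      then show ?thesis using ne4 by simp
    qed
    then have "real n * 1 \<le> real n * (real n * \<epsilon>^2)" by (intro mult_left_mono) auto
    also have "\<dots> \<le> real s * (real s * \<epsilon>^2)" using ns by (intro mult_mono) auto
    finally show ?thesis by (simp add: power2_eq_square)
  next
    case False
    then have As: "A \<le> real s" using s_ge by simp
    have "A^2 \<le> (real s)^2" using As A1 by (intro power_mono) auto
    moreover have "A^2 = real n * real k * ln (real k) / \<epsilon>^4"
    proof -
      have "0 \<le> real n * (real k * ln (real k))" using kl by simp
      then have nn: "0 \<le> real n * real k * ln (real k)" by (simp add: mult.assoc)
      show ?thesis unfolding A_def using nn by (simp add: power_divide power4_eq_xxxx power2_eq_square mult.assoc)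
    qed
    ultimately have "real n * real k * ln (real k) / \<epsilon>^4 * \<epsilon>^2 \<le> (real s)^2 * \<epsilon>^2"
      by (intro mult_right_mono) auto
    moreover have "real n * real k * ln (real k) / \<epsilon>^4 * \<epsilon>^2 = real n * (real k * ln (real k)) / \<epsilon>^2"
      using e0 by (simp add: power2_eq_square power4_eq_xxxx field_simps)
    moreover have "real n \<le> real n * (real k * ln (real k)) / \<epsilon>^2"
    proof -
      have "real n * 1 \<le> real n * (real k * ln (real k))" using kl by (intro mult_left_mono) auto
      moreover have "\<epsilon>^2 \<le> 1" using e0 e1 by (simp add: power_le_one)
      moreover have "real n * \<epsilon>^2 \<le> real n * 1" using \<open>\<epsilon>^2 \<le> 1\<close> by (intro mult_left_mono) auto
      ultimately show ?thesis using e0 by (simp add: le_divide_eq)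
    qed
    ultimately show ?thesis by linarith
  qed
  interpret Pctx P n s \<epsilon>
    by unfold_locales (use n2 supp s1 s_n e0 e1 dtv K R in auto)
  define m where "m = esw_s2 (2^26) n k \<epsilon>"
  define \<mu> where "\<mu> = Fq s (1 / real n)"
  define t where "t = real s * \<epsilon>^2 / (1024 * real n)"
  have s0: "0 < real s" using s1 by simp
  have nr0: "0 < real n" using n1 by simp
  have tpos: "0 < t" using s0 nr0 e0 by (simp add: t_def)
  have mu_le: "\<mu> \<le> real s / real n" unfolding \<mu>_def using Fq_le_sp[of "1 / real n" s] n1 by simp
  have mu0: "0 \<le> \<mu>" unfolding \<mu>_def using n1 by (intro Fq_nonneg) auto
  have t_le: "t \<le> real s / (1024 * real n)"
  proof -
    have "\<epsilon>^2 \<le> 1" using e0 e1 by (simp add: power_le_one)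
    then have "real s * \<epsilon>^2 \<le> real s * 1" by (intro mult_left_mono) auto
    then show ?thesis unfolding t_def using nr0 by (intro divide_right_mono) auto
  qed
  have m_ge: "2^26 * real n * ln (real k) / (real s * \<epsilon>^4) \<le> real m"
    unfolding m_def esw_s2_def s_def[symmetric] by linarith
  have m0: "0 < m"
  proof -
    have "0 < 2^26 * real n * ln (real k) / (real s * \<epsilon>^4)" using nr0 s0 e0 k by simp
    then show ?thesis using m_ge by simp
  qed
  have Pbad: "measure_pmf.prob (replicate_pmf s P) {xs. measure_pmf.prob P (set xs) \<le> \<mu> + 3 * t} \<le> 2/100"
  proof (cases "2^22 * real s \<le> real n")
    case True
    then show ?thesis using P_bad_small by (simp add: \<mu>_def t_def q_def \<tau>_def)
  next
    case False
    then show ?thesis using P_bad_large by (simp add: \<mu>_def t_def q_def \<tau>_def)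
  qed
  have Ubad: "measure_pmf.prob (replicate_pmf s P) {xs. real n * (\<mu> + t) \<le> real (card (set xs))} \<le> 2^20 / 2^64"
  proof -
    have "measure_pmf.prob (replicate_pmf s P) {xs. real n * (\<mu> + t) \<le> real (card (set xs))} \<le> 2^20 / (real s * \<epsilon>^4)"
      unfolding \<mu>_def t_def by (rule U_bad[OF n2 supp s1 s_n e0])
    also have "\<dots> \<le> 2^20 / 2^64" using K by (intro divide_left_mono) auto
    finally show ?thesis .
  qed
  define G where "G = {xs. real (card (set xs)) < real n * (\<mu> + t) \<and> \<mu> + 3 * t < measure_pmf.prob P (set xs)}"
  have probG: "1 - 2/100 - 2^20 / 2^64 \<le> measure_pmf.prob (replicate_pmf s P) G"
  proof -
    have "- G \<subseteq> {xs. real n * (\<mu> + t) \<le> real (card (set xs))} \<union> {xs. measure_pmf.prob P (set xs) \<le> \<mu> + 3 * t}"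
      by (auto simp: G_def not_less)
    then have "measure_pmf.prob (replicate_pmf s P) (- G) \<le> measure_pmf.prob (replicate_pmf s P)
        ({xs. real n * (\<mu> + t) \<le> real (card (set xs))} \<union> {xs. measure_pmf.prob P (set xs) \<le> \<mu> + 3 * t})"
      by (intro measure_pmf.finite_measure_mono) auto
    also have "\<dots> \<le> measure_pmf.prob (replicate_pmf s P) {xs. real n * (\<mu> + t) \<le> real (card (set xs))}
        + measure_pmf.prob (replicate_pmf s P) {xs. measure_pmf.prob P (set xs) \<le> \<mu> + 3 * t}"
      by (rule measure_Un_le) auto
    also have "\<dots> \<le> 2^20 / 2^64 + 2/100" using Pbad Ubad by linarith
    finally have "measure_pmf.prob (replicate_pmf s P) (- G) \<le> 2^20 / 2^64 + 2/100" .
    moreover have "measure_pmf.prob (replicate_pmf s P) (- G) = 1 - measure_pmf.prob (replicate_pmf s P) G"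
      by (simp add: measure_pmf.prob_compl[symmetric] Compl_eq_Diff_UNIV)
    ultimately show ?thesis by linarith
  qed
  have unf: "esw_tester (2^26) (1/1024) n k \<epsilon> P D = bind_pmf (replicate_pmf s P) (\<lambda>xs.
      bind_pmf (Pi_pmf {1..k} [] (\<lambda>j. replicate_pmf m (D j)))
        (\<lambda>Xs. return_pmf {j\<in>{1..k}. \<mu> + 2 * t \<le> real (cnt (set xs) (Xs j)) / real m}))"
  proof -
    have thr: "1 - (1 - 1 / real n) ^ s + 2 * esw_tau (1/1024) n k \<epsilon> = \<mu> + 2 * t"
      by (simp add: \<mu>_def t_def Fq_def esw_tau_def s_def)
    show ?thesis unfolding esw_tester_def Let_def m_def[symmetric] s_def[symmetric]
      by (simp only: thr cnt_def)
  qed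
  have inner: "127/128 \<le> measure_pmf.prob (bind_pmf (Pi_pmf {1..k} [] (\<lambda>j. replicate_pmf m (D j)))
        (\<lambda>Xs. return_pmf {j\<in>{1..k}. \<mu> + 2 * t \<le> real (cnt (set xs) (Xs j)) / real m})) {chi}"
    if xs: "xs \<in> set_pmf (replicate_pmf s P)" "xs \<in> G" for xs
  proof -
    have sx: "set xs \<subseteq> {1..n}" using xs(1) supp by (auto simp: set_replicate_pmf)
    have p_le: "p \<le> 2 * real s / real n" if "p \<le> \<mu> + 3 * t" for p
    proof -
      have "3 * t \<le> real s / real n" using t_le s0 nr0 by (simp add: field_simps)
      then show ?thesis using that mu_le by simp
    qed
    have b: "exp (- real m * t^2 / (4 * p)) \<le> 1 / real k ^ 8" if "0 < p" "p \<le> \<mu> + 3 * t" for p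
      by (rule chern_exp[OF k _ _ e0 m_ge t_def that(1) p_le[OF that(2)]]) (use s1 n1 in auto)
    have "1 - real k * (1 / real k ^ 8) \<le> measure_pmf.prob (Pi_pmf {1..k} [] (\<lambda>j. replicate_pmf m (D j)))
           {Xs. {j\<in>{1..k}. \<mu> + 2 * t \<le> real (cnt (set xs) (Xs j)) / real m} = chi}"
    proof (rule inner_bound[where pl = "\<mu> + 3 * t" and pu = "\<mu> + t" and t = t])
      fix j assume j: "j \<in> {1..k}"
      show "finite (set_pmf (D j))"
      proof (cases "j \<in> chi")
        case True then show ?thesis using Dchi fin by auto
      next
        case False
        have "{1..n} \<noteq> {}" using n1 by simp
        then have "set_pmf (unif n) = {1..n}" by (simp add: unif_def)
        then show ?thesis using Dn j False by auto
      qed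
    next
      fix j assume "j \<in> chi"
      then show "\<mu> + 3 * t \<le> measure_pmf.prob (D j) (set xs)" using Dchi xs(2) by (auto simp: G_def)
    next
      fix j assume j: "j \<in> {1..k} - chi"
      have "measure_pmf.prob (D j) (set xs) = real (card ({1..n} \<inter> set xs)) / real n"
        using Dn j n1 by (auto simp: unif_def measure_pmf_of_set)
      also have "{1..n} \<inter> set xs = set xs" using sx by auto
      finally have "measure_pmf.prob (D j) (set xs) = real (card (set xs)) / real n" .
      moreover have "real (card (set xs)) < real n * (\<mu> + t)" using xs(2) by (simp add: G_def)
      ultimately have "real n * measure_pmf.prob (D j) (set xs) < real n * (\<mu> + t)" using nr0 by simp
      then have "measure_pmf.prob (D j) (set xs) < \<mu> + t" using nr0 by (simp only: mult_less_cancel_left_pos)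
      then show "measure_pmf.prob (D j) (set xs) \<le> \<mu> + t" by simp
    next
      show "exp (- real m * t^2 / (4 * (\<mu> + t))) \<le> 1 / real k ^ 8"
        by (rule b) (use tpos mu0 in auto)
      show "exp (- real m * t^2 / (4 * (\<mu> + 3 * t))) \<le> 1 / real k ^ 8"
        by (rule b) (use tpos mu0 in auto)
    qed (use chi tpos mu0 m0 in auto)
    moreover have "real k * (1 / real k ^ 8) \<le> 1/128"
    proof -
      have "(2::real)^7 \<le> real k ^ 7" using k by (intro power_mono) auto
      have e8: "real k ^ 8 = real k * real k ^ 7" using power_add[of "real k" 1 7] by simp
      have "real k * (1 / real k ^ 8) = 1 / real k ^ 7" using k unfolding e8 by simp
      also have "\<dots> \<le> 1 / 2^7" using \<open>(2::real)^7 \<le> real k ^ 7\<close> k by (intro divide_left_mono) auto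
      finally show ?thesis by simp
    qed
    ultimately show ?thesis by (simp add: prob_bind_return)
  qed
  have "127/128 * measure_pmf.prob (replicate_pmf s P) G \<le> measure_pmf.prob (esw_tester (2^26) (1/1024) n k \<epsilon> P D) {chi}"
    unfolding unf by (rule prob_bind_lower) (use inner in auto)
  moreover have "8/9 \<le> 127/128 * (1 - 2/100 - 2^20 / 2^64 :: real)" by simp
  moreover have "127/128 * (1 - 2/100 - 2^20 / 2^64) \<le> 127/128 * measure_pmf.prob (replicate_pmf s P) G"
    using probG by (intro mult_left_mono) auto
  ultimately show ?thesis by linarith
qed



lemma main_sc:
  fixes k n :: nat and \<epsilon> :: real
  assumes k: "k \<ge> 2" and n1: "n \<ge> 1" and e0: "0 < \<epsilon>" and e1: "\<epsilon> \<le> 1"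
  shows "(real n \<ge> real k * ln (real k) / \<epsilon>^4 \<longrightarrow>
         real (esw_s1 n k \<epsilon> + k * esw_s2 (2^26) n k \<epsilon>) \<le> (2^26 + 4) * sqrt (real n * real k * ln (real k)) / \<epsilon>^2) \<and>
      (real n \<le> real k * ln (real k) / \<epsilon>^4 \<longrightarrow>
         real (esw_s1 n k \<epsilon> + k * esw_s2 (2^26) n k \<epsilon>) \<le> (2^26 + 4) * real k * ln (real k) / \<epsilon>^4)"
proof -
  define A where "A = sqrt (real n * real k * ln (real k)) / \<epsilon>^2"
  define B where "B = real k * ln (real k) / \<epsilon>^4"
  define s where "s = esw_s1 n k \<epsilon>"
  define m where "m = esw_s2 (2^26) n k \<epsilon>"
  have s_ge: "min (real n) A \<le> real s" and s_le: "real s \<le> min (real n) A + 1" and s_n: "s \<le> n"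
    and s1: "1 \<le> s" and A1: "1 \<le> A"
    using s1_facts[OF k n1 e0 e1] by (simp_all add: A_def s_def)
  have kl: "1 \<le> real k * ln (real k)" by (rule lnk_facts(2)[OF k])
  have k2: "real k \<le> 2 * (real k * ln (real k))" by (rule lnk_facts(3)[OF k])
  have s0: "0 < real s" using s1 by simp
  have nr0: "0 < real n" using n1 by simp
  have e4: "0 < \<epsilon>^4" using e0 by simp
  have lk0: "0 < ln (real k)" using k by simp
  have m_le: "real m \<le> 2^26 * real n * ln (real k) / (real s * \<epsilon>^4) + 1"
  proof -
    have "0 \<le> 2^26 * real n * ln (real k) / (real s * \<epsilon>^4)" using s0 e4 lk0 by simp
    then show ?thesis unfolding m_def esw_s2_def s_def[symmetric] by linarith
  qed
  have A0: "0 \<le> A" using A1 by simp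
  have AB: "A^2 = real n * B"
  proof -
    have nn: "0 \<le> real n * real k * ln (real k)" using kl by (simp add: mult.assoc)
    show ?thesis unfolding A_def B_def using nn by (simp add: power_divide power4_eq_xxxx power2_eq_square)
  qed
  have Bkl: "real k * ln (real k) \<le> B"
  proof -
    have "\<epsilon>^4 \<le> 1" using e0 e1 by (simp add: power_le_one)
    then show ?thesis unfolding B_def using kl e4 by (simp add: le_divide_eq) (metis mult_left_mono mult.right_neutral order.trans zero_le_one kl)
  qed
  have kB: "real k \<le> 2 * B" using k2 Bkl by linarith
  have B0: "0 < B" using Bkl kl by linarith
  show ?thesis
  proof (intro conjI impI)
    assume nB: "real k * ln (real k) / \<epsilon>^4 \<le> real n"
    then have nB': "B \<le> real n" by (simp add: B_def)
    have "A^2 \<le> (real n)^2" using AB nB' nr0 by (simp add: power2_eq_square mult_left_mono)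
    then have An: "A \<le> real n" using A0 nr0 by (simp add: power2_le_iff_abs_le)
    have BA: "B \<le> A"
    proof -
      have "B^2 \<le> A^2" using AB nB' B0 by (simp add: power2_eq_square mult_right_mono)
      then show ?thesis using A0 B0 by (simp add: power2_le_iff_abs_le)
    qed
    have sA: "A \<le> real s" using s_ge An by simp
    have sA2: "real s \<le> 2 * A" using s_le An A1 by simp
    have "real k * real m \<le> real k * (2^26 * real n * ln (real k) / (real s * \<epsilon>^4) + 1)"
      using m_le by (intro mult_left_mono) auto
    also have "\<dots> \<le> real k * (2^26 * real n * ln (real k) / (A * \<epsilon>^4) + 1)"
      using sA A1 e4 lk0 nr0 by (intro mult_left_mono add_right_mono divide_left_mono mult_right_mono) auto
    also have "\<dots> = 2^26 * (real n * B) / A + real k"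
      using A1 e4 by (simp add: B_def field_simps)
    also have "\<dots> = 2^26 * A + real k"
    proof -
      have "real n * B = A * A" using AB by (simp add: power2_eq_square)
      then show ?thesis using A1 by simp
    qed
    finally have km: "real k * real m \<le> 2^26 * A + real k" .
    have "real (s + k * m) = real s + real k * real m" by simp
    also have "\<dots> \<le> 2 * A + (2^26 * A + 2 * A)" using sA2 km kB BA by linarith
    also have "\<dots> = (2^26 + 4) * sqrt (real n * real k * ln (real k)) / \<epsilon>^2" by (simp add: A_def algebra_simps)
    finally show "real (esw_s1 n k \<epsilon> + k * esw_s2 (2^26) n k \<epsilon>) \<le> (2^26 + 4) * sqrt (real n * real k * ln (real k)) / \<epsilon>^2"
      by (simp add: s_def m_def)
  next
    assume nB: "real n \<le> real k * ln (real k) / \<epsilon>^4"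
    then have nB': "real n \<le> B" by (simp add: B_def)
    have nA: "real n \<le> A"
    proof -
      have "(real n)^2 \<le> A^2" using AB nB' nr0 by (simp add: power2_eq_square mult_left_mono)
      then show ?thesis using A0 nr0 by (simp add: power2_le_iff_abs_le)
    qed
    have sn: "real s = real n" using s_ge s_n nA by simp
    have "real k * real m \<le> real k * (2^26 * real n * ln (real k) / (real s * \<epsilon>^4) + 1)"
      using m_le by (intro mult_left_mono) auto
    also have "\<dots> = 2^26 * B + real k" using sn nr0 e4 by (simp add: B_def field_simps)
    finally have km: "real k * real m \<le> 2^26 * B + real k" .
    have "real (s + k * m) = real s + real k * real m" by simp
    also have "\<dots> \<le> B + (2^26 * B + 2 * B)" using sn nB' km kB by linarith
    also have "\<dots> \<le> (2^26 + 4) * B" using B0 by simp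
    also have "\<dots> = (2^26 + 4) * real k * ln (real k) / \<epsilon>^4" by (simp add: B_def)
    finally show "real (esw_s1 n k \<epsilon> + k * esw_s2 (2^26) n k \<epsilon>) \<le> (2^26 + 4) * real k * ln (real k) / \<epsilon>^4"
      by (simp add: s_def m_def)
  qed
qed

theorem lemma3p1:
  shows "\<exists>c0>0. \<exists>c>0. \<exists>c'>0. \<exists>C>0.
    \<forall>(k::nat) (n::nat) (\<epsilon>::real) (P::nat pmf) (D::nat \<Rightarrow> nat pmf) (chi::nat set).
      k \<ge> 2 \<longrightarrow> n \<ge> 1 \<longrightarrow> 0 < \<epsilon> \<longrightarrow> \<epsilon> \<le> 1 \<longrightarrow> \<epsilon> \<ge> c0 * real n powr (-1/4) \<longrightarrow>
      set_pmf P \<subseteq> {1..n} \<longrightarrow> dTV n P (unif n) \<ge> \<epsilon> \<longrightarrow>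
      chi \<subseteq> {1..k} \<longrightarrow> (\<forall>i\<in>chi. D i = P) \<longrightarrow> (\<forall>i\<in>{1..k} - chi. D i = unif n) \<longrightarrow>
      measure_pmf.prob (esw_tester c c' n k \<epsilon> P D) {chi} \<ge> 8/9 \<and>
      (real n \<ge> real k * ln (real k) / \<epsilon>^4 \<longrightarrow>
         real (esw_s1 n k \<epsilon> + k * esw_s2 c n k \<epsilon>) \<le> C * sqrt (real n * real k * ln (real k)) / \<epsilon>^2) \<and>
      (real n \<le> real k * ln (real k) / \<epsilon>^4 \<longrightarrow>
         real (esw_s1 n k \<epsilon> + k * esw_s2 c n k \<epsilon>) \<le> C * real k * ln (real k) / \<epsilon>^4)"
proof (rule exI[of _ "2^32"], rule conjI, simp, rule exI[of _ "2^26"], rule conjI, simp,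
    rule exI[of _ "1/1024"], rule conjI, simp, rule exI[of _ "2^26 + 4"], rule conjI, simp,
    intro allI impI conjI)
  fix k n :: nat and \<epsilon> :: real and P :: "nat pmf" and D :: "nat \<Rightarrow> nat pmf" and chi :: "nat set"
  assume k: "2 \<le> k" and n1: "1 \<le> n" and e0: "0 < \<epsilon>" and e1: "\<epsilon> \<le> 1"
    and ec: "2^32 * real n powr (-1/4) \<le> \<epsilon>" and supp: "set_pmf P \<subseteq> {1..n}"
    and dtv: "\<epsilon> \<le> dTV n P (unif n)" and chi: "chi \<subseteq> {1..k}"
    and Dchi: "\<forall>i\<in>chi. D i = P" and Dn: "\<forall>i\<in>{1..k} - chi. D i = unif n"
  show "8/9 \<le> measure_pmf.prob (esw_tester (2^26) (1/1024) n k \<epsilon> P D) {chi}"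
    by (rule main_prob[OF k n1 e0 e1 ec supp dtv chi Dchi Dn])
  note sc = main_sc[OF k n1 e0 e1]
  show "real k * ln (real k) / \<epsilon>^4 \<le> real n \<Longrightarrow>
      real (esw_s1 n k \<epsilon> + k * esw_s2 (2^26) n k \<epsilon>) \<le> (2^26 + 4) * sqrt (real n * real k * ln (real k)) / \<epsilon>^2"
    using sc by blast
  show "real n \<le> real k * ln (real k) / \<epsilon>^4 \<Longrightarrow>
      real (esw_s1 n k \<epsilon> + k * esw_s2 (2^26) n k \<epsilon>) \<le> (2^26 + 4) * real k * ln (real k) / \<epsilon>^4"
    using sc by blast
qed


end
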